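(* Let $M$ be a Poisson manifold with a local star product $*$ and let $\omega:C^\infty_0(M)[[\lambda]]\to\mathbb C[[\lambda]]$ be a positive $\mathbb C[[\lambda]]$-linear functional. Then $\omega$ is faithful if and only if $\operatorname{supp}\omega=M$.
   Context: $C^\infty(M)$ denotes complex-valued smooth functions and $\lambda$ is a formal parameter. A (local) star product $*$ on $M$ is an associative $\mathbb C[[\lambda]]$-bilinear product on $C^\infty(M)[[\lambda]]$ with $f*g=\sum_{r\ge0}\lambda^rM_r(f,g)$ for $f,g\in C^\infty(M)$, where the $M_r$ are local operators, $M_0(f,g)=fg$, $M_1(f,g)-M_1(g,f)=\mathrm i\{f,g\}$, $M_r$ vanishes on constants for $r\ge1$, and $\overline{f*g}=\bar g*\bar f$ ($\bar\lambda=\lambda$). $C^\infty_0(O)[[\lambda]]$ is the set of series all of whose coefficients have compact support in the open set $O$. $\mathbb R[[\lambda]]$ is ordered by: $a>0$ iff its lowest-order nonzero coefficient is positive; $\omega$ is positive if $\omega(\bar f*f)\ge0$ for all $f$. $\operatorname{supp}\omega$ is the complement of the union of all open $O$ with $\omega|_{C^\infty_0(O)[[\lambda]]}=0$. $\omega$ is faithful if its Gel'fand ideal $\mathcal J_\omega=\{f\in C^\infty_0(M)[[\lambda]]:\omega(\bar f*f)=0\}$ equals $\{0\}$. *)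

theory Defs
  imports "HOL-Analysis.Analysis"
begin

text \<open>C-infinity on an open subset of a real normed space: there is a family D of
  iterated Frechet derivatives (indexed by the list of directions), D [] = f on S,
  and each D vs is Frechet differentiable at every point of S with derivative
  v maps to D (v # vs).\<close>
definition smooth_on :: "'e::real_normed_vector set \<Rightarrow> ('e \<Rightarrow> 'f::real_normed_vector) \<Rightarrow> bool" where
  "smooth_on S f \<longleftrightarrow>
     (\<exists>D :: 'e list \<Rightarrow> 'e \<Rightarrow> 'f.
        (\<forall>x\<in>S. D [] x = f x) \<and>
        (\<forall>vs. \<forall>x\<in>S. (D vs has_derivative (\<lambda>v. D (v # vs) x)) (at x)))"

definition is_chart :: "'m::topological_space set \<Rightarrow> ('m \<Rightarrow> 'e::euclidean_space) \<Rightarrow> bool" where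
  "is_chart U \<phi> \<longleftrightarrow> open U \<and> open (\<phi> ` U) \<and> homeomorphism U (\<phi> ` U) \<phi> (inv_into U \<phi>)"

definition smooth_atlas :: "('m::topological_space set \<times> ('m \<Rightarrow> 'e::euclidean_space)) set \<Rightarrow> bool" where
  "smooth_atlas A \<longleftrightarrow>
     (\<forall>(U,\<phi>)\<in>A. is_chart U \<phi>) \<and>
     (\<Union>(fst ` A) = UNIV) \<and>
     (\<forall>(U,\<phi>)\<in>A. \<forall>(V,\<psi>)\<in>A. smooth_on (\<phi> ` (U \<inter> V)) (\<psi> \<circ> inv_into U \<phi>))"

definition smooth_fun :: "('m::topological_space set \<times> ('m \<Rightarrow> 'e::euclidean_space)) set \<Rightarrow> ('m \<Rightarrow> complex) \<Rightarrow> bool" where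
  "smooth_fun A f \<longleftrightarrow> (\<forall>(U,\<phi>)\<in>A. smooth_on (\<phi> ` U) (f \<circ> inv_into U \<phi>))"

definition fsupp :: "('m::topological_space \<Rightarrow> complex) \<Rightarrow> 'm set" where
  "fsupp f = closure {x. f x \<noteq> 0}"

text \<open>A Poisson bracket on C-infinity(M) (complex-bilinearly extended): a Lie bracket
  satisfying the Leibniz rule and mapping real functions to real functions.\<close>
definition poisson_bracket ::
  "('m::topological_space set \<times> ('m \<Rightarrow> 'e::euclidean_space)) set \<Rightarrow>
   (('m \<Rightarrow> complex) \<Rightarrow> ('m \<Rightarrow> complex) \<Rightarrow> ('m \<Rightarrow> complex)) \<Rightarrow> bool" where
  "poisson_bracket A pb \<longleftrightarrow>
     (\<forall>f g h (c::complex). smooth_fun A f \<and> smooth_fun A g \<and> smooth_fun A h \<longrightarrow>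
        smooth_fun A (pb f g) \<and>
        pb f g = (\<lambda>x. - pb g f x) \<and>
        pb (\<lambda>x. f x + g x) h = (\<lambda>x. pb f h x + pb g h x) \<and>
        pb (\<lambda>x. c * f x) g = (\<lambda>x. c * pb f g x) \<and>
        (\<lambda>x. pb f (pb g h) x + pb g (pb h f) x + pb h (pb f g) x) = (\<lambda>x. 0) \<and>
        pb f (\<lambda>x. g x * h x) = (\<lambda>x. pb f g x * h x + g x * pb f h x) \<and>
        pb (\<lambda>x. cnj (f x)) (\<lambda>x. cnj (g x)) = (\<lambda>x. cnj (pb f g x)))"

text \<open>Elements of C-infinity(M)[[lambda]] are represented as coefficient sequences
  nat => ('m => complex); elements of C[[lambda]] as nat => complex.\<close>

definition star :: "(nat \<Rightarrow> ('m \<Rightarrow> complex) \<Rightarrow> ('m \<Rightarrow> complex) \<Rightarrow> ('m \<Rightarrow> complex)) \<Rightarrow>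
                    (nat \<Rightarrow> 'm \<Rightarrow> complex) \<Rightarrow> (nat \<Rightarrow> 'm \<Rightarrow> complex) \<Rightarrow> (nat \<Rightarrow> 'm \<Rightarrow> complex)" where
  "star Mr F G = (\<lambda>n x. \<Sum>r\<le>n. \<Sum>s\<le>n - r. Mr r (F s) (G (n - r - s)) x)"

definition series_cnj :: "(nat \<Rightarrow> 'm \<Rightarrow> complex) \<Rightarrow> (nat \<Rightarrow> 'm \<Rightarrow> complex)" where
  "series_cnj F = (\<lambda>n x. cnj (F n x))"

definition fps_smult :: "(nat \<Rightarrow> complex) \<Rightarrow> (nat \<Rightarrow> 'm \<Rightarrow> complex) \<Rightarrow> (nat \<Rightarrow> 'm \<Rightarrow> complex)" where
  "fps_smult a F = (\<lambda>n x. \<Sum>k\<le>n. a k * F (n - k) x)"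

definition fps_cmult :: "(nat \<Rightarrow> complex) \<Rightarrow> (nat \<Rightarrow> complex) \<Rightarrow> (nat \<Rightarrow> complex)" where
  "fps_cmult a b = (\<lambda>n. \<Sum>k\<le>n. a k * b (n - k))"

definition local_star_product ::
  "('m::topological_space set \<times> ('m \<Rightarrow> 'e::euclidean_space)) set \<Rightarrow>
   (('m \<Rightarrow> complex) \<Rightarrow> ('m \<Rightarrow> complex) \<Rightarrow> ('m \<Rightarrow> complex)) \<Rightarrow>
   (nat \<Rightarrow> ('m \<Rightarrow> complex) \<Rightarrow> ('m \<Rightarrow> complex) \<Rightarrow> ('m \<Rightarrow> complex)) \<Rightarrow> bool" where
  "local_star_product A pb Mr \<longleftrightarrow>
     (\<forall>r f g h (c::complex). smooth_fun A f \<and> smooth_fun A g \<and> smooth_fun A h \<longrightarrow>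
        smooth_fun A (Mr r f g) \<and>
        Mr r (\<lambda>x. f x + g x) h = (\<lambda>x. Mr r f h x + Mr r g h x) \<and>
        Mr r h (\<lambda>x. f x + g x) = (\<lambda>x. Mr r h f x + Mr r h g x) \<and>
        Mr r (\<lambda>x. c * f x) g = (\<lambda>x. c * Mr r f g x) \<and>
        Mr r g (\<lambda>x. c * f x) = (\<lambda>x. c * Mr r g f x) \<and>
        (\<forall>U. open U \<and> (\<forall>x\<in>U. f x = 0) \<longrightarrow> (\<forall>x\<in>U. Mr r f g x = 0 \<and> Mr r g f x = 0)) \<and>
        (r \<ge> 1 \<longrightarrow> Mr r (\<lambda>x. c) f = (\<lambda>x. 0) \<and> Mr r f (\<lambda>x. c) = (\<lambda>x. 0)) \<and>
        (\<lambda>x. cnj (Mr r f g x)) = Mr r (\<lambda>x. cnj (g x)) (\<lambda>x. cnj (f x)) \<and>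
        (\<forall>x. (\<Sum>s\<le>r. Mr s (Mr (r - s) f g) h x) = (\<Sum>s\<le>r. Mr s f (Mr (r - s) g h) x))) \<and>
     (\<forall>f g. smooth_fun A f \<and> smooth_fun A g \<longrightarrow>
        Mr 0 f g = (\<lambda>x. f x * g x) \<and>
        (\<lambda>x. Mr 1 f g x - Mr 1 g f x) = (\<lambda>x. \<i> * pb f g x))"

definition C0_series ::
  "('m::topological_space set \<times> ('m \<Rightarrow> 'e::euclidean_space)) set \<Rightarrow> 'm set \<Rightarrow> (nat \<Rightarrow> 'm \<Rightarrow> complex) set" where
  "C0_series A W = {F. \<forall>n. smooth_fun A (F n) \<and> compact (fsupp (F n)) \<and> fsupp (F n) \<subseteq> W}"

text \<open>Order on R[[lambda]] (inside C[[lambda]]): a >= 0 iff a is real and either a = 0 or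
  its lowest-order nonzero coefficient is positive.\<close>
definition fps_nonneg :: "(nat \<Rightarrow> complex) \<Rightarrow> bool" where
  "fps_nonneg a \<longleftrightarrow> (\<forall>n. Im (a n) = 0) \<and> (a = (\<lambda>n. 0) \<or> Re (a (LEAST n. a n \<noteq> 0)) > 0)"

definition positive_functional ::
  "('m::topological_space set \<times> ('m \<Rightarrow> 'e::euclidean_space)) set \<Rightarrow>
   (nat \<Rightarrow> ('m \<Rightarrow> complex) \<Rightarrow> ('m \<Rightarrow> complex) \<Rightarrow> ('m \<Rightarrow> complex)) \<Rightarrow>
   ((nat \<Rightarrow> 'm \<Rightarrow> complex) \<Rightarrow> (nat \<Rightarrow> complex)) \<Rightarrow> bool" where
  "positive_functional A Mr \<omega> \<longleftrightarrow>
     (\<forall>F\<in>C0_series A UNIV. \<forall>G\<in>C0_series A UNIV. \<omega> (\<lambda>n x. F n x + G n x) = (\<lambda>n. \<omega> F n + \<omega> G n)) \<and>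
     (\<forall>a. \<forall>F\<in>C0_series A UNIV. \<omega> (fps_smult a F) = fps_cmult a (\<omega> F)) \<and>
     (\<forall>F\<in>C0_series A UNIV. fps_nonneg (\<omega> (star Mr (series_cnj F) F)))"

definition faithful ::
  "('m::topological_space set \<times> ('m \<Rightarrow> 'e::euclidean_space)) set \<Rightarrow>
   (nat \<Rightarrow> ('m \<Rightarrow> complex) \<Rightarrow> ('m \<Rightarrow> complex) \<Rightarrow> ('m \<Rightarrow> complex)) \<Rightarrow>
   ((nat \<Rightarrow> 'm \<Rightarrow> complex) \<Rightarrow> (nat \<Rightarrow> complex)) \<Rightarrow> bool" where
  "faithful A Mr \<omega> \<longleftrightarrow>
     {F \<in> C0_series A UNIV. \<omega> (star Mr (series_cnj F) F) = (\<lambda>n. 0)} = {(\<lambda>n x. 0)}"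

definition functional_supp ::
  "('m::topological_space set \<times> ('m \<Rightarrow> 'e::euclidean_space)) set \<Rightarrow>
   ((nat \<Rightarrow> 'm \<Rightarrow> complex) \<Rightarrow> (nat \<Rightarrow> complex)) \<Rightarrow> 'm set" where
  "functional_supp A \<omega> =
     - \<Union>{W. open W \<and> (\<forall>F\<in>C0_series A W. \<omega> F = (\<lambda>n. 0))}"

end

theory Submission
  imports Defs "HOL-Computational_Algebra.Polynomial"
begin

fun Ck :: "nat \<Rightarrow> 'a::real_normed_vector set \<Rightarrow> ('a \<Rightarrow> 'b::real_normed_vector) \<Rightarrow> bool" where
  "Ck 0 S f = True"
| "Ck (Suc n) S f = ((\<forall>x\<in>S. f differentiable (at x)) \<and>
      (\<forall>v. Ck n S (\<lambda>x. frechet_derivative f (at x) v)))"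

lemma Ck_cong:
  assumes "open S" shows "Ck n S f \<Longrightarrow> (\<And>x. x \<in> S \<Longrightarrow> f x = g x) \<Longrightarrow> Ck n S g"
proof (induction n arbitrary: f g)
  case 0 then show ?case by simp
next
  case (Suc n)
  have d: "(g has_derivative frechet_derivative f (at x)) (at x)" if "x \<in> S" for x
  proof -
    have "(f has_derivative frechet_derivative f (at x)) (at x)"
      using Suc.prems(1) that frechet_derivative_works by auto
    then show ?thesis
      using has_derivative_transform_within_open[of f _ x UNIV S g] assms that Suc.prems(2) by auto
  qed
  have e: "frechet_derivative g (at x) = frechet_derivative f (at x)" if "x \<in> S" for x
    using frechet_derivative_at[OF d[OF that]] by simp
  show ?case
  proof (simp, intro conjI ballI allI)
    fix x assume "x \<in> S" then show "g differentiable at x" using d differentiableI by blast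
  next
    fix v
    show "Ck n S (\<lambda>x. frechet_derivative g (at x) v)"
      using Suc.IH[of "\<lambda>x. frechet_derivative f (at x) v"] Suc.prems e by auto
  qed
qed

lemma CkI:
  assumes "open S" "\<And>x. x \<in> S \<Longrightarrow> (f has_derivative f' x) (at x)"
    "\<And>v. Ck n S (\<lambda>x. f' x v)"
  shows "Ck (Suc n) S f"
proof (simp, intro conjI ballI allI)
  fix x assume "x \<in> S" then show "f differentiable at x" using assms differentiableI by blast
next
  fix v
  show "Ck n S (\<lambda>x. frechet_derivative f (at x) v)"
  proof (rule Ck_cong[OF assms(1) assms(3)[of v]])
    fix x assume "x \<in> S"
    show "f' x v = frechet_derivative f (at x) v"
      using frechet_derivative_at[OF assms(2)[OF \<open>x \<in> S\<close>]] by simp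
  qed
qed

lemma Ck_SucD: "Ck (Suc n) S f \<Longrightarrow> Ck n S f"
proof (induction n arbitrary: f)
  case 0 then show ?case by simp
next
  case (Suc n) then show ?case by (auto)
qed

lemma Ck_le: "Ck n S f \<Longrightarrow> m \<le> n \<Longrightarrow> Ck m S f"
proof (induction n)
  case 0 then show ?case by simp
next
  case (Suc n) then show ?case using Ck_SucD[of n S f] le_Suc_eq by blast
qed

lemma Ck_deriv: "Ck (Suc n) S f \<Longrightarrow> x \<in> S \<Longrightarrow> (f has_derivative frechet_derivative f (at x)) (at x)"
  using frechet_derivative_works by auto

lemma Ck_subset: "Ck n S f \<Longrightarrow> T \<subseteq> S \<Longrightarrow> Ck n T f"
proof (induction n arbitrary: f)
  case 0 then show ?case by simp
next
  case (Suc n) then show ?case unfolding Ck.simps by blast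
qed

lemma Ck_union: "Ck n S f \<Longrightarrow> Ck n T f \<Longrightarrow> Ck n (S \<union> T) f"
proof (induction n arbitrary: f)
  case 0 then show ?case by simp
next
  case (Suc n) then show ?case unfolding Ck.simps by blast
qed

lemma Ck_const: "open S \<Longrightarrow> Ck n S (\<lambda>x. c)"
proof (induction n arbitrary: c)
  case 0 then show ?case by simp
next
  case (Suc n)
  show ?case by (rule CkI[where f'="\<lambda>x v. 0"]) (use Suc in simp_all)
qed

lemma Ck_linear:
  assumes "open S" "bounded_linear L" shows "Ck n S f \<Longrightarrow> Ck n S (\<lambda>x. L (f x))"
proof (induction n arbitrary: f)
  case 0 then show ?case by simp
next
  case (Suc n)
  show ?case
  proof (rule CkI[where f'="\<lambda>x v. L (frechet_derivative f (at x) v)"])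
    show "open S" by fact
    fix x assume "x \<in> S"
    then show "((\<lambda>x. L (f x)) has_derivative (\<lambda>v. L (frechet_derivative f (at x) v))) (at x)"
      using Ck_deriv[OF Suc.prems] bounded_linear.has_derivative[OF assms(2)] by blast
  next
    fix v show "Ck n S (\<lambda>x. L (frechet_derivative f (at x) v))" using Suc by auto
  qed
qed

lemma Ck_add:
  assumes "open S" shows "Ck n S f \<Longrightarrow> Ck n S g \<Longrightarrow> Ck n S (\<lambda>x. f x + g x)"
proof (induction n arbitrary: f g)
  case 0 then show ?case by simp
next
  case (Suc n)
  show ?case
  proof (rule CkI[where f'="\<lambda>x v. frechet_derivative f (at x) v + frechet_derivative g (at x) v"])
    show "open S" by fact
    fix x assume "x \<in> S"
    then show "((\<lambda>x. f x + g x) has_derivative (\<lambda>v. frechet_derivative f (at x) v + frechet_derivative g (at x) v)) (at x)"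
      using Ck_deriv[OF Suc.prems(1)] Ck_deriv[OF Suc.prems(2)] has_derivative_add by blast
  next
    fix v show "Ck n S (\<lambda>x. frechet_derivative f (at x) v + frechet_derivative g (at x) v)" using Suc by auto
  qed
qed

lemma Ck_sum:
  assumes "open S" shows "(\<And>i. i \<in> I \<Longrightarrow> Ck n S (f i)) \<Longrightarrow> Ck n S (\<lambda>x. \<Sum>i\<in>I. f i x)"
proof (induction I rule: infinite_finite_induct)
  case (infinite A) then show ?case using Ck_const[OF assms] by simp
next
  case empty then show ?case using Ck_const[OF assms] by simp
next
  case (insert i F)
  have a: "Ck n S (f i)" using insert.prems by simp
  have b: "Ck n S (\<lambda>x. \<Sum>i\<in>F. f i x)" using insert.IH insert.prems by simp
  show ?case using Ck_add[OF assms a b] insert.hyps by simp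
qed

lemma Ck_bilinear:
  assumes "open S" "bounded_bilinear bl"
  shows "Ck n S f \<Longrightarrow> Ck n S g \<Longrightarrow> Ck n S (\<lambda>x. bl (f x) (g x))"
proof (induction n arbitrary: f g)
  case 0 then show ?case by simp
next
  case (Suc n)
  show ?case
  proof (rule CkI[where f'="\<lambda>x v. bl (f x) (frechet_derivative g (at x) v) + bl (frechet_derivative f (at x) v) (g x)"])
    show "open S" by fact
    fix x assume "x \<in> S"
    then show "((\<lambda>x. bl (f x) (g x)) has_derivative (\<lambda>v. bl (f x) (frechet_derivative g (at x) v) + bl (frechet_derivative f (at x) v) (g x))) (at x)"
      using Ck_deriv[OF Suc.prems(1)] Ck_deriv[OF Suc.prems(2)] bounded_bilinear.FDERIV[OF assms(2)] by blast
  next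
    fix v
    have f1: "Ck n S f" "Ck n S g" using Suc.prems Ck_SucD by blast+
    have f2: "Ck n S (\<lambda>x. frechet_derivative f (at x) v)" "Ck n S (\<lambda>x. frechet_derivative g (at x) v)"
      using Suc.prems by simp_all
    show "Ck n S (\<lambda>x. bl (f x) (frechet_derivative g (at x) v) + bl (frechet_derivative f (at x) v) (g x))"
      using Ck_add[OF assms(1) Suc.IH[OF f1(1) f2(2)] Suc.IH[OF f2(1) f1(2)]] .
  qed
qed

lemma Ck_mult:
  assumes "open S" shows "Ck n S f \<Longrightarrow> Ck n S g \<Longrightarrow> Ck n S (\<lambda>x. f x * (g x :: 'b::real_normed_algebra))"
  using Ck_bilinear[OF assms bounded_bilinear_mult] .

lemma Ck_inverse:
  fixes f :: "'a::real_normed_vector \<Rightarrow> 'b::real_normed_div_algebra"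
  assumes "open S" "\<And>n. Ck n S f" "\<And>x. x \<in> S \<Longrightarrow> f x \<noteq> 0"
  shows "Ck n S (\<lambda>x. inverse (f x))"
proof (induction n)
  case 0 then show ?case by simp
next
  case (Suc n)
  show ?case
  proof (rule CkI[where f'="\<lambda>x v. - (inverse (f x) * frechet_derivative f (at x) v * inverse (f x))"])
    show "open S" by fact
    fix x assume "x \<in> S"
    show "((\<lambda>x. inverse (f x)) has_derivative (\<lambda>v. - (inverse (f x) * frechet_derivative f (at x) v * inverse (f x)))) (at x)"
      using Deriv.has_derivative_inverse[OF assms(3)[OF \<open>x \<in> S\<close>] Ck_deriv[OF assms(2)[of "Suc 0"] \<open>x \<in> S\<close>]] .
  next
    fix v
    have "Ck n S (\<lambda>x. frechet_derivative f (at x) v)" using assms(2)[of "Suc n"] by simp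
    then have "Ck n S (\<lambda>x. inverse (f x) * frechet_derivative f (at x) v * inverse (f x))"
      using Ck_mult[OF assms(1) Ck_mult[OF assms(1) Suc.IH] Suc.IH] by simp
    then show "Ck n S (\<lambda>x. - (inverse (f x) * frechet_derivative f (at x) v * inverse (f x)))"
      by (rule Ck_linear[OF assms(1) bounded_linear_minus[OF bounded_linear_ident]])
  qed
qed

lemma Ck_compose_real:
  fixes q :: "'a::real_normed_vector \<Rightarrow> real"
  assumes "open S" "\<And>n. Ck n S q" "\<And>k t. (g k has_real_derivative g (Suc k) t) (at t)"
  shows "Ck n S (\<lambda>x. g k (q x))"
proof (induction n arbitrary: k)
  case 0 then show ?case by simp
next
  case (Suc n)
  show ?case
  proof (rule CkI[where f'="\<lambda>x v. g (Suc k) (q x) * frechet_derivative q (at x) v"])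
    show "open S" by fact
    fix x assume "x \<in> S"
    have 1: "(q has_derivative frechet_derivative q (at x)) (at x)" using Ck_deriv[OF assms(2)[of "Suc 0"]] \<open>x \<in> S\<close> by blast
    have 2: "(g k has_derivative (\<lambda>h. g (Suc k) (q x) * h)) (at (q x))"
      using assms(3)[of k "q x"] by (simp add: has_field_derivative_def)
    show "((\<lambda>x. g k (q x)) has_derivative (\<lambda>v. g (Suc k) (q x) * frechet_derivative q (at x) v)) (at x)"
      using diff_chain_at[OF 1 2] by (simp add: o_def)
  next
    fix v
    have "Ck n S (\<lambda>x. frechet_derivative q (at x) v)" using assms(2)[of "Suc n"] by simp
    then show "Ck n S (\<lambda>x. g (Suc k) (q x) * frechet_derivative q (at x) v)"
      using Ck_mult[OF assms(1) Suc.IH] by blast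
  qed
qed

definition Cinf where "Cinf S f \<longleftrightarrow> (\<forall>n. Ck n S f)"

lemma smooth_on_Cinf:
  assumes "open S" shows "smooth_on S f \<longleftrightarrow> Cinf S f"
proof
  assume "smooth_on S f"
  then obtain D where D0: "\<forall>x\<in>S. D [] x = f x"
    and DD: "\<forall>vs. \<forall>x\<in>S. (D vs has_derivative (\<lambda>v. D (v # vs) x)) (at x)"
    unfolding smooth_on_def by blast
  have "Ck n S (D vs)" for n vs
  proof (induction n arbitrary: vs)
    case 0 then show ?case by simp
  next
    case (Suc n)
    show ?case by (rule CkI[where f'="\<lambda>x v. D (v # vs) x"]) (use assms DD Suc in auto)
  qed
  then show "Cinf S f" unfolding Cinf_def using Ck_cong[OF assms] D0 by metis
next
  assume C: "Cinf S f"
  define D :: "'a list \<Rightarrow> 'a \<Rightarrow> 'b" where "D = rec_list f (\<lambda>v vs d. \<lambda>x. frechet_derivative d (at x) v)"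
  have Dn: "D [] = f" "D (v # vs) = (\<lambda>x. frechet_derivative (D vs) (at x) v)" for v vs
    by (simp_all add: D_def)
  have CD: "Ck n S (D vs)" for n vs
  proof (induction vs arbitrary: n)
    case Nil then show ?case using C by (simp add: Cinf_def Dn)
  next
    case (Cons v vs) then show ?case using Ck.simps(2)[of n S "D vs"] by (simp add: Dn)
  qed
  show "smooth_on S f" unfolding smooth_on_def
  proof (intro exI[of _ D] conjI ballI allI)
    fix x assume "x \<in> S" then show "D [] x = f x" by (simp add: Dn)
  next
    fix vs x assume "x \<in> S"
    then have "(D vs has_derivative frechet_derivative (D vs) (at x)) (at x)"
      using Ck_deriv[OF CD[of "Suc 0"]] by blast
    moreover have "frechet_derivative (D vs) (at x) = (\<lambda>v. D (v # vs) x)" by (simp add: Dn)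
    ultimately show "(D vs has_derivative (\<lambda>v. D (v # vs) x)) (at x)" by simp
  qed
qed

primrec bP :: "nat \<Rightarrow> real poly" where
  "bP 0 = 1"
| "bP (Suc k) = [:0,0,1:] * (bP k - pderiv (bP k))"

definition bk :: "nat \<Rightarrow> real \<Rightarrow> real" where
  "bk k t = (if t > 0 then poly (bP k) (inverse t) * exp (- inverse t) else 0)"

lemma poly_exp_limit: "((\<lambda>u. poly p u * exp (- u)) \<longlongrightarrow> (0::real)) at_top"
proof -
  have e: "poly p u * exp (- u) = (\<Sum>i\<le>degree p. coeff p i * (u ^ i / exp u))" for u
    by (simp add: poly_altdef sum_distrib_right exp_minus divide_inverse mult.assoc)
  have "((\<lambda>u. \<Sum>i\<le>degree p. coeff p i * (u ^ i / exp u)) \<longlongrightarrow> (\<Sum>i\<le>degree p. coeff p i * 0)) at_top"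
    by (intro tendsto_sum tendsto_mult tendsto_const tendsto_power_div_exp_0)
  then show ?thesis unfolding e by simp
qed

lemma poly_exp_limit0: "((\<lambda>h. poly p (inverse h) * exp (- inverse h)) \<longlongrightarrow> (0::real)) (at_right 0)"
  using filterlim_compose[OF poly_exp_limit filterlim_inverse_at_top_right] by (simp add: o_def)

lemma bk_deriv: "(bk k has_real_derivative bk (Suc k) t) (at t)"
proof (cases "t > 0")
  case True
  let ?p = "bP k"
  have "((\<lambda>t. poly ?p (inverse t) * exp (- inverse t)) has_real_derivative
     (poly (pderiv ?p) (inverse t) * (- inverse (t^2)) * exp (- inverse t) +
      poly ?p (inverse t) * (exp (- inverse t) * inverse (t^2)))) (at t)"
  proof -
    have 1: "((\<lambda>t. poly ?p (inverse t)) has_real_derivative poly (pderiv ?p) (inverse t) * (- inverse (t^2))) (at t)"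
      using DERIV_chain2[OF poly_DERIV[of ?p "inverse t"] DERIV_inverse[of t]] True
      by (simp add: power2_eq_square)
    have 2: "((\<lambda>t. exp (- inverse t)) has_real_derivative exp (- inverse t) * inverse (t^2)) (at t)"
      using DERIV_chain2[OF DERIV_exp DERIV_minus[OF DERIV_inverse[of t]]] True
      by (simp add: power2_eq_square)
    show ?thesis using DERIV_mult[OF 1 2] by (simp add: algebra_simps)
  qed
  moreover have "poly (pderiv ?p) (inverse t) * (- inverse (t^2)) * exp (- inverse t) +
      poly ?p (inverse t) * (exp (- inverse t) * inverse (t^2)) = bk (Suc k) t"
    using True by (simp add: bk_def algebra_simps power2_eq_square)
  ultimately have "((\<lambda>t. poly ?p (inverse t) * exp (- inverse t)) has_real_derivative bk (Suc k) t) (at t)"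
    by simp
  then show ?thesis
    by (rule has_field_derivative_transform_within_open[where S="{0<..}"]) (use True in \<open>auto simp: bk_def\<close>)
next
  case False
  show ?thesis
  proof (cases "t < 0")
    case True
    have "((\<lambda>t. 0) has_real_derivative 0) (at t)" by simp
    then have "(bk k has_real_derivative 0) (at t)"
      by (rule has_field_derivative_transform_within_open[where S="{..<0}"]) (use True in \<open>auto simp: bk_def\<close>)
    then show ?thesis using True by (simp add: bk_def)
  next
    case False
    with \<open>\<not> t > 0\<close> have t0: "t = 0" by simp
    have "((\<lambda>h. bk k h / h) \<longlongrightarrow> 0) (at_left 0)"
    proof (rule Lim_transform_eventually[OF tendsto_const[of 0]])
      show "\<forall>\<^sub>F x in at_left 0. 0 = bk k x / x"
        unfolding eventually_at_left_field by (auto simp: bk_def intro!: exI[of _ "-1"])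
    qed
    moreover have "((\<lambda>h. bk k h / h) \<longlongrightarrow> 0) (at_right 0)"
    proof (rule Lim_transform_eventually[OF poly_exp_limit0[of "pCons 0 (bP k)"]])
      show "\<forall>\<^sub>F x in at_right 0. poly (pCons 0 (bP k)) (inverse x) * exp (- inverse x) = bk k x / x"
        unfolding eventually_at_right_field by (auto simp: bk_def divide_inverse intro!: exI[of _ "1"])
    qed
    ultimately have "((\<lambda>h. bk k h / h) \<longlongrightarrow> 0) (at 0)" using filterlim_at_split by blast
    then show ?thesis unfolding DERIV_def t0 by (simp add: bk_def)
  qed
qed

lemma bk_pos: "t > 0 \<Longrightarrow> bk 0 t > 0"
  by (simp add: bk_def)

lemma bk_zero: "t \<le> 0 \<Longrightarrow> bk k t = 0"
  by (simp add: bk_def)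

lemma Ck_UN: "(\<And>i. i \<in> I \<Longrightarrow> Ck n (S i) f) \<Longrightarrow> Ck n (\<Union>i\<in>I. S i) f"
proof (induction n arbitrary: f)
  case 0 then show ?case by simp
next
  case (Suc n)
  show ?case unfolding Ck.simps
  proof (intro conjI ballI allI)
    fix x assume "x \<in> (\<Union>i\<in>I. S i)" then show "f differentiable at x" using Suc.prems by auto
  next
    fix v show "Ck n (\<Union>i\<in>I. S i) (\<lambda>x. frechet_derivative f (at x) v)"
      using Suc.IH Suc.prems by simp
  qed
qed

lemma chartD:
  assumes "smooth_atlas A" "(U, \<phi>) \<in> A"
  shows "open U" "open (\<phi> ` U)" "homeomorphism U (\<phi> ` U) \<phi> (inv_into U \<phi>)"
proof -
  have "is_chart U \<phi>" using assms unfolding smooth_atlas_def by blast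
  then show "open U" "open (\<phi> ` U)" "homeomorphism U (\<phi> ` U) \<phi> (inv_into U \<phi>)"
    unfolding is_chart_def by blast+
qed

lemma chart_inv:
  assumes "smooth_atlas A" "(U, \<phi>) \<in> A" "x \<in> U"
  shows "inv_into U \<phi> (\<phi> x) = x"
  using chartD(3)[OF assms(1,2)] assms(3) unfolding homeomorphism_def by auto

lemma chart_inv_in:
  assumes "smooth_atlas A" "(U, \<phi>) \<in> A" "y \<in> \<phi> ` U"
  shows "inv_into U \<phi> y \<in> U" "\<phi> (inv_into U \<phi> y) = y"
  using chartD(3)[OF assms(1,2)] assms(3) unfolding homeomorphism_def by auto

lemma chart_open_image:
  assumes "smooth_atlas A" "(U, \<phi>) \<in> A" "open W"
  shows "open (\<phi> ` (U \<inter> W))"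
proof -
  have "openin (top_of_set U) (U \<inter> W)" using assms(3) chartD(1)[OF assms(1,2)]
    by (simp add: openin_open_Int)
  then have "openin (top_of_set (\<phi> ` U)) (\<phi> ` (U \<inter> W))"
    using homeomorphism_imp_open_map[OF chartD(3)[OF assms(1,2)]] by blast
  then show ?thesis using chartD(2)[OF assms(1,2)] openin_open_eq by blast
qed

lemma chart_cover: assumes "smooth_atlas A" shows "\<exists>U \<phi>. (U, \<phi>) \<in> A \<and> x \<in> U"
proof -
  have "x \<in> \<Union>(fst ` A)" using assms unfolding smooth_atlas_def by simp
  then obtain p where "p \<in> A" "x \<in> fst p" by blast
  then show ?thesis by (cases p) auto
qed

lemma smooth_fun_iff:
  assumes "smooth_atlas A"
  shows "smooth_fun A f \<longleftrightarrow> (\<forall>(U,\<phi>)\<in>A. Cinf (\<phi> ` U) (f \<circ> inv_into U \<phi>))"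
  unfolding smooth_fun_def
proof (intro ball_cong refl)
  fix p assume "p \<in> A"
  then obtain U \<phi> where p: "p = (U, \<phi>)" "(U, \<phi>) \<in> A" by (cases p) auto
  show "(case p of (U, \<phi>) \<Rightarrow> smooth_on (\<phi> ` U) (f \<circ> inv_into U \<phi>)) =
        (case p of (U, \<phi>) \<Rightarrow> Cinf (\<phi> ` U) (f \<circ> inv_into U \<phi>))"
    using smooth_on_Cinf[OF chartD(2)[OF assms p(2)]] p(1) by simp
qed

lemma smooth_funD:
  assumes "smooth_atlas A" "smooth_fun A f" "(U, \<phi>) \<in> A"
  shows "Ck n (\<phi> ` U) (\<lambda>y. f (inv_into U \<phi> y))"
proof -
  have "Cinf (\<phi> ` U) (f \<circ> inv_into U \<phi>)" using assms smooth_fun_iff[OF assms(1)] by blast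
  then show ?thesis unfolding Cinf_def o_def by blast
qed

lemma smooth_funI:
  assumes "smooth_atlas A" "\<And>U \<phi> n. (U, \<phi>) \<in> A \<Longrightarrow> Ck n (\<phi> ` U) (\<lambda>y. f (inv_into U \<phi> y))"
  shows "smooth_fun A f"
  unfolding smooth_fun_iff[OF assms(1)]
proof (intro ballI)
  fix p assume "p \<in> A"
  then obtain U \<phi> where p: "p = (U, \<phi>)" "(U, \<phi>) \<in> A" by (cases p) auto
  show "case p of (U, \<phi>) \<Rightarrow> Cinf (\<phi> ` U) (f \<circ> inv_into U \<phi>)"
    using assms(2)[OF p(2)] p(1) unfolding Cinf_def o_def by simp
qed

lemma smooth_fun_localI:
  assumes A: "smooth_atlas A"
    and loc: "\<And>U \<phi> x. (U, \<phi>) \<in> A \<Longrightarrow> x \<in> U \<Longrightarrow>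
       \<exists>N. open N \<and> x \<in> N \<and> (\<forall>n. Ck n (\<phi> ` (U \<inter> N)) (\<lambda>y. f (inv_into U \<phi> y)))"
  shows "smooth_fun A f"
proof (rule smooth_funI[OF A])
  fix U \<phi> n assume UA: "(U, \<phi>) \<in> A"
  obtain N where N: "\<And>x. x \<in> U \<Longrightarrow> open (N x) \<and> x \<in> N x \<and> (\<forall>n. Ck n (\<phi> ` (U \<inter> N x)) (\<lambda>y. f (inv_into U \<phi> y)))"
    using loc[OF UA] by metis
  have "\<phi> ` U = (\<Union>x\<in>U. \<phi> ` (U \<inter> N x))" using N by blast
  moreover have "Ck n (\<Union>x\<in>U. \<phi> ` (U \<inter> N x)) (\<lambda>y. f (inv_into U \<phi> y))"
    using N by (intro Ck_UN) auto
  ultimately show "Ck n (\<phi> ` U) (\<lambda>y. f (inv_into U \<phi> y))" by simp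
qed

lemma smooth_fun_local_Ck:
  assumes A: "smooth_atlas A" and UA: "(U, \<phi>) \<in> A" and "open N" and g: "smooth_fun A g"
    and eq: "\<And>x. x \<in> N \<Longrightarrow> f x = g x"
  shows "Ck n (\<phi> ` (U \<inter> N)) (\<lambda>y. f (inv_into U \<phi> y))"
proof (rule Ck_cong[OF chart_open_image[OF A UA \<open>open N\<close>]])
  show "Ck n (\<phi> ` (U \<inter> N)) (\<lambda>y. g (inv_into U \<phi> y))"
    by (rule Ck_subset[OF smooth_funD[OF A g UA]]) (rule image_mono, rule Int_lower1)
  fix y assume "y \<in> \<phi> ` (U \<inter> N)"
  then obtain x where "x \<in> U" "x \<in> N" "y = \<phi> x" by blast
  then show "g (inv_into U \<phi> y) = f (inv_into U \<phi> y)" using chart_inv[OF A UA \<open>x \<in> U\<close>] eq[OF \<open>x \<in> N\<close>] by simp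
qed

lemma smooth_fun_const: assumes A: "smooth_atlas A" shows "smooth_fun A (\<lambda>x. c)"
proof (rule smooth_funI[OF A])
  fix U \<phi> n assume UA: "(U, \<phi>) \<in> A"
  show "Ck n (\<phi> ` U) (\<lambda>y. c)" by (rule Ck_const[OF chartD(2)[OF A UA]])
qed

lemma smooth_fun_add: assumes A: "smooth_atlas A" and "smooth_fun A f" "smooth_fun A g"
  shows "smooth_fun A (\<lambda>x. f x + g x)"
proof (rule smooth_funI[OF A])
  fix U \<phi> n assume UA: "(U, \<phi>) \<in> A"
  show "Ck n (\<phi> ` U) (\<lambda>y. f (inv_into U \<phi> y) + g (inv_into U \<phi> y))"
    by (rule Ck_add[OF chartD(2)[OF A UA] smooth_funD[OF A assms(2) UA] smooth_funD[OF A assms(3) UA]])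
qed

lemma smooth_fun_mult: assumes A: "smooth_atlas A" and "smooth_fun A f" "smooth_fun A g"
  shows "smooth_fun A (\<lambda>x. f x * g x)"
proof (rule smooth_funI[OF A])
  fix U \<phi> n assume UA: "(U, \<phi>) \<in> A"
  show "Ck n (\<phi> ` U) (\<lambda>y. f (inv_into U \<phi> y) * g (inv_into U \<phi> y))"
    by (rule Ck_mult[OF chartD(2)[OF A UA] smooth_funD[OF A assms(2) UA] smooth_funD[OF A assms(3) UA]])
qed

lemma smooth_fun_cmult: "smooth_atlas A \<Longrightarrow> smooth_fun A g \<Longrightarrow> smooth_fun A (\<lambda>x. c * g x)"
  by (rule smooth_fun_mult[OF _ smooth_fun_const])

lemma smooth_fun_cnj: assumes A: "smooth_atlas A" and "smooth_fun A f"
  shows "smooth_fun A (\<lambda>x. cnj (f x))"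
proof (rule smooth_funI[OF A])
  fix U \<phi> n assume UA: "(U, \<phi>) \<in> A"
  show "Ck n (\<phi> ` U) (\<lambda>y. cnj (f (inv_into U \<phi> y)))"
    by (rule Ck_linear[OF chartD(2)[OF A UA] bounded_linear_cnj smooth_funD[OF A assms(2) UA]])
qed

lemma smooth_fun_sum: assumes A: "smooth_atlas A" and "\<And>i. i \<in> I \<Longrightarrow> smooth_fun A (f i)"
  shows "smooth_fun A (\<lambda>x. \<Sum>i\<in>I. f i x)"
proof (rule smooth_funI[OF A])
  fix U \<phi> n assume UA: "(U, \<phi>) \<in> A"
  show "Ck n (\<phi> ` U) (\<lambda>y. \<Sum>i\<in>I. f i (inv_into U \<phi> y))"
    by (rule Ck_sum[OF chartD(2)[OF A UA]]) (rule smooth_funD[OF A assms(2) UA])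
qed

lemma smooth_fun_cont:
  fixes f :: "'m::t2_space \<Rightarrow> complex"
  assumes A: "smooth_atlas A" and f: "smooth_fun A f"
  shows "continuous_on UNIV f"
proof -
  have "isCont f x" for x
  proof -
    obtain U \<phi> where UA: "(U, \<phi>) \<in> A" and "x \<in> U" using chart_cover[OF A] by blast
    have C: "Ck (Suc 0) (\<phi> ` U) (\<lambda>y. f (inv_into U \<phi> y))" using smooth_funD[OF A f UA] .
    have "continuous_on (\<phi> ` U) (\<lambda>y. f (inv_into U \<phi> y))"
      using C by (auto intro!: continuous_at_imp_continuous_on differentiable_imp_continuous_within)
    moreover have "continuous_on U \<phi>" using chartD(3)[OF A UA] unfolding homeomorphism_def by auto
    ultimately have "continuous_on U ((\<lambda>y. f (inv_into U \<phi> y)) \<circ> \<phi>)"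
      by (rule continuous_on_compose[rotated]) 
    then have "continuous_on U f"
      by (rule continuous_on_cong[THEN iffD1, rotated 2]) (auto simp: chart_inv[OF A UA])
    then show ?thesis using continuous_on_eq_continuous_at[OF chartD(1)[OF A UA]] \<open>x \<in> U\<close> by blast
  qed
  then show ?thesis by (simp add: continuous_at_imp_continuous_on)
qed

section \<open>Local star product facts\<close>

lemma lsp_all:
  assumes "local_star_product A pb Mr" "smooth_fun A f" "smooth_fun A g" "smooth_fun A h"
  shows "smooth_fun A (Mr r f g) \<and>
        Mr r (\<lambda>x. f x + g x) h = (\<lambda>x. Mr r f h x + Mr r g h x) \<and>
        Mr r h (\<lambda>x. f x + g x) = (\<lambda>x. Mr r h f x + Mr r h g x) \<and>
        Mr r (\<lambda>x. c * f x) g = (\<lambda>x. c * Mr r f g x) \<and>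
        Mr r g (\<lambda>x. c * f x) = (\<lambda>x. c * Mr r g f x) \<and>
        (\<forall>U. open U \<and> (\<forall>x\<in>U. f x = 0) \<longrightarrow> (\<forall>x\<in>U. Mr r f g x = 0 \<and> Mr r g f x = 0)) \<and>
        (r \<ge> 1 \<longrightarrow> Mr r (\<lambda>x. c) f = (\<lambda>x. 0) \<and> Mr r f (\<lambda>x. c) = (\<lambda>x. 0)) \<and>
        (\<lambda>x. cnj (Mr r f g x)) = Mr r (\<lambda>x. cnj (g x)) (\<lambda>x. cnj (f x)) \<and>
        (\<forall>x. (\<Sum>s\<le>r. Mr s (Mr (r - s) f g) h x) = (\<Sum>s\<le>r. Mr s f (Mr (r - s) g h) x))"
proof -
  note X = conjunct1[OF assms(1)[unfolded local_star_product_def]]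
  show ?thesis using X[rule_format, OF conjI[OF assms(2) conjI[OF assms(3) assms(4)]], of r c] .
qed

lemma lsp_M0:
  assumes "local_star_product A pb Mr" "smooth_fun A f" "smooth_fun A g"
  shows "Mr 0 f g = (\<lambda>x. f x * g x)"
proof -
  note X = conjunct2[OF assms(1)[unfolded local_star_product_def]]
  show ?thesis using X[rule_format, OF conjI[OF assms(2) assms(3)]] by (rule conjunct1)
qed

lemma lspD:
  assumes "local_star_product A pb Mr" "smooth_fun A f" "smooth_fun A g"
  shows lsp_smooth: "smooth_fun A (Mr r f g)"
    and lsp_add_left: "smooth_fun A h \<Longrightarrow> Mr r (\<lambda>x. f x + g x) h = (\<lambda>x. Mr r f h x + Mr r g h x)"
    and lsp_add_right: "smooth_fun A h \<Longrightarrow> Mr r h (\<lambda>x. f x + g x) = (\<lambda>x. Mr r h f x + Mr r h g x)"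
    and lsp_smult_left: "Mr r (\<lambda>x. c * f x) g = (\<lambda>x. c * Mr r f g x)"
    and lsp_smult_right: "Mr r g (\<lambda>x. c * f x) = (\<lambda>x. c * Mr r g f x)"
    and lsp_local: "open U \<Longrightarrow> (\<forall>x\<in>U. f x = 0) \<Longrightarrow> x \<in> U \<Longrightarrow> Mr r f g x = 0 \<and> Mr r g f x = 0"
proof -
  note L = lsp_all[OF assms(1-3) assms(2), of r c]
  show "smooth_fun A (Mr r f g)" using L by (rule conjunct1)
  show "Mr r (\<lambda>x. c * f x) g = (\<lambda>x. c * Mr r f g x)" using L by (elim conjE)
  show "Mr r g (\<lambda>x. c * f x) = (\<lambda>x. c * Mr r g f x)" using L by (elim conjE)
  show "open U \<Longrightarrow> (\<forall>x\<in>U. f x = 0) \<Longrightarrow> x \<in> U \<Longrightarrow> Mr r f g x = 0 \<and> Mr r g f x = 0"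
  proof -
    assume "open U" "\<forall>x\<in>U. f x = 0" "x \<in> U"
    have "\<forall>U. open U \<and> (\<forall>x\<in>U. f x = 0) \<longrightarrow> (\<forall>x\<in>U. Mr r f g x = 0 \<and> Mr r g f x = 0)"
      using L by (elim conjE)
    then show ?thesis using \<open>open U\<close> \<open>\<forall>x\<in>U. f x = 0\<close> \<open>x \<in> U\<close> by blast
  qed
  assume h: "smooth_fun A h"
  note L2 = lsp_all[OF assms(1-3) h, of r c]
  show "Mr r (\<lambda>x. f x + g x) h = (\<lambda>x. Mr r f h x + Mr r g h x)" using L2 by (elim conjE)
  show "Mr r h (\<lambda>x. f x + g x) = (\<lambda>x. Mr r h f x + Mr r h g x)" using L2 by (elim conjE)
qed

lemma lsp_zero_left:
  assumes "local_star_product A pb Mr" "smooth_atlas A" "smooth_fun A g"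
  shows "Mr r (\<lambda>x. 0) g = (\<lambda>x. 0)"
proof -
  have "Mr r (\<lambda>x. (0::complex) * 0) g = (\<lambda>x. 0 * Mr r (\<lambda>x. 0) g x)"
    by (rule lsp_smult_left[OF assms(1) smooth_fun_const[OF assms(2)] assms(3)])
  then show ?thesis by simp
qed

lemma lsp_zero_right:
  assumes "local_star_product A pb Mr" "smooth_atlas A" "smooth_fun A g"
  shows "Mr r g (\<lambda>x. 0) = (\<lambda>x. 0)"
proof -
  have "Mr r g (\<lambda>x. (0::complex) * 0) = (\<lambda>x. 0 * Mr r g (\<lambda>x. 0) x)"
    by (rule lsp_smult_right[OF assms(1) smooth_fun_const[OF assms(2)] assms(3)])
  then show ?thesis by simp
qed

section \<open>Supports\<close>

lemma fsupp_closed: "closed (fsupp f)"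
  unfolding fsupp_def by simp

lemma not_in_fsupp: "x \<notin> fsupp f \<Longrightarrow> f x = 0"
proof (rule ccontr)
  assume "x \<notin> fsupp f" "f x \<noteq> 0"
  then have "x \<in> {x. f x \<noteq> 0}" by simp
  then have "x \<in> fsupp f" unfolding fsupp_def using closure_subset[of "{x. f x \<noteq> 0}"] by (rule subsetD[rotated])
  then show False using \<open>x \<notin> fsupp f\<close> by simp
qed

lemma fsupp_subset: "closed C \<Longrightarrow> (\<And>x. f x \<noteq> 0 \<Longrightarrow> x \<in> C) \<Longrightarrow> fsupp f \<subseteq> C"
  unfolding fsupp_def by (rule closure_minimal) auto

lemma compact_closed_subset: "compact K \<Longrightarrow> closed C \<Longrightarrow> C \<subseteq> K \<Longrightarrow> compact C"
  using compact_Int_closed[of K C] by (simp add: Int_absorb1)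

lemma fsupp_Mr:
  assumes "local_star_product A pb Mr" "smooth_fun A f" "smooth_fun A g"
  shows "fsupp (Mr r f g) \<subseteq> fsupp f" "fsupp (Mr r f g) \<subseteq> fsupp g"
proof -
  show "fsupp (Mr r f g) \<subseteq> fsupp f"
  proof (rule fsupp_subset[OF fsupp_closed])
    fix x assume "Mr r f g x \<noteq> 0"
    show "x \<in> fsupp f"
    proof (rule ccontr)
      assume "x \<notin> fsupp f"
      have o: "open (- fsupp f)" using fsupp_closed open_Compl by blast
      have z: "\<forall>y\<in>- fsupp f. f y = 0" using not_in_fsupp by blast
      have "Mr r f g x = 0"
        using lsp_local[OF assms o z] \<open>x \<notin> fsupp f\<close> by blast
      then show False using \<open>Mr r f g x \<noteq> 0\<close> by simp
    qed
  qed
  show "fsupp (Mr r f g) \<subseteq> fsupp g"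
  proof (rule fsupp_subset[OF fsupp_closed])
    fix x assume "Mr r f g x \<noteq> 0"
    show "x \<in> fsupp g"
    proof (rule ccontr)
      assume "x \<notin> fsupp g"
      have o: "open (- fsupp g)" using fsupp_closed open_Compl by blast
      have z: "\<forall>y\<in>- fsupp g. g y = 0" using not_in_fsupp by blast
      have "Mr r f g x = 0"
        using lsp_local[OF assms(1,3,2) o z] \<open>x \<notin> fsupp g\<close> by blast
      then show False using \<open>Mr r f g x \<noteq> 0\<close> by simp
    qed
  qed
qed

lemma fsupp_sum:
  assumes "finite I"
  shows "fsupp (\<lambda>x. \<Sum>i\<in>I. f i x) \<subseteq> (\<Union>i\<in>I. fsupp (f i))"
proof (rule fsupp_subset)
  show "closed (\<Union>i\<in>I. fsupp (f i))" using assms fsupp_closed by blast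
  fix x assume "(\<Sum>i\<in>I. f i x) \<noteq> 0"
  then obtain i where "i \<in> I" "f i x \<noteq> 0"
    using sum.neutral[of I "\<lambda>i. f i x"] by metis
  then show "x \<in> (\<Union>i\<in>I. fsupp (f i))" using not_in_fsupp by blast
qed

lemma fsupp_add: "fsupp (\<lambda>x. f x + g x) \<subseteq> fsupp f \<union> fsupp g"
proof (rule fsupp_subset)
  show "closed (fsupp f \<union> fsupp g)" using fsupp_closed by blast
  fix x assume "f x + g x \<noteq> 0"
  then have "f x \<noteq> 0 \<or> g x \<noteq> 0" by auto
  then show "x \<in> fsupp f \<union> fsupp g" using not_in_fsupp by blast
qed

lemma fsupp_mult: "fsupp (\<lambda>x. c * g x) \<subseteq> fsupp g"
proof (rule fsupp_subset[OF fsupp_closed])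
  fix x assume "c * g x \<noteq> 0"
  then have "g x \<noteq> 0" by auto
  then show "x \<in> fsupp g" using not_in_fsupp by blast
qed

lemma fsupp_zero: "fsupp (\<lambda>x. 0) = {}"
  unfolding fsupp_def by simp

lemma fsupp_cnj: "fsupp (\<lambda>x. cnj (f x)) = fsupp f"
  unfolding fsupp_def by simp

section \<open>C0 series\<close>

lemma C0D: "F \<in> C0_series A W \<Longrightarrow> smooth_fun A (F n) \<and> compact (fsupp (F n)) \<and> fsupp (F n) \<subseteq> W"
  unfolding C0_series_def by blast

lemma C0I: "(\<And>n. smooth_fun A (F n)) \<Longrightarrow> (\<And>n. compact (fsupp (F n))) \<Longrightarrow> (\<And>n. fsupp (F n) \<subseteq> W) \<Longrightarrow> F \<in> C0_series A W"
  unfolding C0_series_def by blast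

lemma C0_mono: "F \<in> C0_series A W \<Longrightarrow> W \<subseteq> W' \<Longrightarrow> F \<in> C0_series A W'"
  unfolding C0_series_def by blast

lemma C0_zero: "smooth_atlas A \<Longrightarrow> (\<lambda>n x. 0) \<in> C0_series A W"
  by (rule C0I) (simp_all add: smooth_fun_const fsupp_zero)

lemma C0_add:
  assumes "smooth_atlas A" "F \<in> C0_series A W" "G \<in> C0_series A W"
  shows "(\<lambda>n x. F n x + G n x) \<in> C0_series A W"
proof (rule C0I)
  fix n
  show "smooth_fun A (\<lambda>x. F n x + G n x)" using smooth_fun_add[OF assms(1)] C0D[OF assms(2)] C0D[OF assms(3)] by blast
  have s: "fsupp (\<lambda>x. F n x + G n x) \<subseteq> fsupp (F n) \<union> fsupp (G n)" by (rule fsupp_add)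
  show "compact (fsupp (\<lambda>x. F n x + G n x))"
    by (rule compact_closed_subset[OF _ fsupp_closed s]) (use C0D[OF assms(2)] C0D[OF assms(3)] in blast)
  show "fsupp (\<lambda>x. F n x + G n x) \<subseteq> W" using s C0D[OF assms(2)] C0D[OF assms(3)] by blast
qed

lemma C0_cnj:
  assumes "smooth_atlas A" "F \<in> C0_series A W"
  shows "series_cnj F \<in> C0_series A W"
  unfolding series_cnj_def
  by (rule C0I) (use C0D[OF assms(2)] smooth_fun_cnj[OF assms(1)] in \<open>simp_all add: fsupp_cnj\<close>)

definition shiftS :: "nat \<Rightarrow> complex \<Rightarrow> (nat \<Rightarrow> 'm \<Rightarrow> complex) \<Rightarrow> (nat \<Rightarrow> 'm \<Rightarrow> complex)" where
  "shiftS N z F = (\<lambda>n x. if N \<le> n then z * F (n - N) x else 0)"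

definition shiftC :: "nat \<Rightarrow> complex \<Rightarrow> (nat \<Rightarrow> complex) \<Rightarrow> (nat \<Rightarrow> complex)" where
  "shiftC N z a = (\<lambda>n. if N \<le> n then z * a (n - N) else 0)"

definition monoC :: "nat \<Rightarrow> complex \<Rightarrow> nat \<Rightarrow> complex" where
  "monoC N z = (\<lambda>j. if j = N then z else 0)"

lemma C0_shift:
  assumes "smooth_atlas A" "F \<in> C0_series A W"
  shows "shiftS N z F \<in> C0_series A W"
proof (rule C0I)
  fix n
  show "smooth_fun A (shiftS N z F n)"
  proof (cases "N \<le> n")
    case True
    then have "shiftS N z F n = (\<lambda>x. z * F (n - N) x)" unfolding shiftS_def by simp
    then show ?thesis using smooth_fun_cmult[OF assms(1)] C0D[OF assms(2)] by simp
  next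
    case False
    then have "shiftS N z F n = (\<lambda>x. 0)" unfolding shiftS_def by simp
    then show ?thesis using smooth_fun_const[OF assms(1)] by simp
  qed
  have s: "fsupp (shiftS N z F n) \<subseteq> fsupp (F (n - N))"
    unfolding shiftS_def using fsupp_mult fsupp_zero by (cases "N \<le> n") auto
  show "compact (fsupp (shiftS N z F n))"
    by (rule compact_closed_subset[OF _ fsupp_closed s]) (use C0D[OF assms(2)] in blast)
  show "fsupp (shiftS N z F n) \<subseteq> W" using s C0D[OF assms(2)] by blast
qed

lemma fps_smult_mono: "fps_smult (monoC N z) F = shiftS N z F"
proof (intro ext)
  fix n x
  have "(\<Sum>k\<le>n. monoC N z k * F (n - k) x) = (\<Sum>k\<le>n. if k = N then z * F (n - N) x else 0)"
    by (rule sum.cong) (auto simp: monoC_def)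
  also have "\<dots> = (if N \<le> n then z * F (n - N) x else 0)" by simp
  finally show "fps_smult (monoC N z) F n x = shiftS N z F n x"
    unfolding fps_smult_def shiftS_def by simp
qed

lemma fps_cmult_mono: "fps_cmult (monoC N z) a = shiftC N z a"
proof (intro ext)
  fix n
  have "(\<Sum>k\<le>n. monoC N z k * a (n - k)) = (\<Sum>k\<le>n. if k = N then z * a (n - N) else 0)"
    by (rule sum.cong) (auto simp: monoC_def)
  also have "\<dots> = (if N \<le> n then z * a (n - N) else 0)" by simp
  finally show "fps_cmult (monoC N z) a n = shiftC N z a n"
    unfolding fps_cmult_def shiftC_def by simp
qed

section \<open>Star product algebra\<close>

definition PP :: "nat \<Rightarrow> (nat \<times> nat) set" where "PP n = {(r, s). r + s \<le> n}"

lemma finite_PP: "finite (PP n)"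
  by (rule finite_subset[of _ "{..n} \<times> {..n}"]) (auto simp: PP_def)

lemma star_pairs: "star Mr F G n x = (\<Sum>(r, s)\<in>PP n. Mr r (F s) (G (n - r - s)) x)"
proof -
  have "star Mr F G n x = (\<Sum>r\<le>n. \<Sum>s\<le>n - r. Mr r (F s) (G (n - r - s)) x)"
    unfolding star_def by simp
  also have "\<dots> = (\<Sum>(r, s)\<in>(SIGMA r:{..n}. {..n - r}). Mr r (F s) (G (n - r - s)) x)"
    by (rule sum.Sigma) auto
  also have "(SIGMA r:{..n}. {..n - r}) = PP n" unfolding PP_def by auto
  finally show ?thesis .
qed

lemma C0_star:
  assumes A: "smooth_atlas A" and L: "local_star_product A pb Mr"
    and F: "F \<in> C0_series A W" and G: "G \<in> C0_series A W"
  shows "star Mr F G \<in> C0_series A W"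
proof (rule C0I)
  fix n
  have sm: "smooth_fun A (Mr r (F s) (G t))" for r s t
    using lsp_smooth[OF L] C0D[OF F] C0D[OF G] by blast
  show "smooth_fun A (star Mr F G n)"
    unfolding star_def by (intro smooth_fun_sum[OF A] sm)
  have "fsupp (star Mr F G n) \<subseteq> (\<Union>p\<in>PP n. fsupp (case p of (r, s) \<Rightarrow> Mr r (F s) (G (n - r - s))))"
  proof -
    have "star Mr F G n = (\<lambda>x. \<Sum>p\<in>PP n. (case p of (r, s) \<Rightarrow> Mr r (F s) (G (n - r - s))) x)"
      by (intro ext) (simp add: star_pairs case_prod_unfold)
    then show ?thesis using fsupp_sum[OF finite_PP] by simp
  qed
  also have "\<dots> \<subseteq> (\<Union>s\<le>n. fsupp (F s))"
  proof (intro UN_least)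
    fix p assume "p \<in> PP n"
    then obtain r s where p: "p = (r, s)" "s \<le> n" unfolding PP_def by auto
    have "fsupp (Mr r (F s) (G (n - r - s))) \<subseteq> fsupp (F s)"
      using fsupp_Mr(1)[OF L] C0D[OF F] C0D[OF G] by blast
    then show "fsupp (case p of (r, s) \<Rightarrow> Mr r (F s) (G (n - r - s))) \<subseteq> (\<Union>s\<le>n. fsupp (F s))"
      using p by auto
  qed
  finally have s: "fsupp (star Mr F G n) \<subseteq> (\<Union>s\<le>n. fsupp (F s))" .
  show "compact (fsupp (star Mr F G n))"
    by (rule compact_closed_subset[OF _ fsupp_closed s]) (use C0D[OF F] in blast)
  show "fsupp (star Mr F G n) \<subseteq> W" using s C0D[OF F] by blast
qed

lemma star_add_left:
  assumes A: "smooth_atlas A" and L: "local_star_product A pb Mr"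
    and sF: "\<And>n. smooth_fun A (F n)" and sG: "\<And>n. smooth_fun A (G n)" and sH: "\<And>n. smooth_fun A (H n)"
  shows "star Mr (\<lambda>n x. F n x + G n x) H = (\<lambda>n x. star Mr F H n x + star Mr G H n x)"
proof (intro ext)
  fix n x
  have t: "Mr r (\<lambda>x. F s x + G s x) (H t) x = Mr r (F s) (H t) x + Mr r (G s) (H t) x" for r s t
    using lsp_add_left[OF L sF sG sH] by simp
  show "star Mr (\<lambda>n x. F n x + G n x) H n x = star Mr F H n x + star Mr G H n x"
    unfolding star_def t by (simp add: sum.distrib)
qed

lemma star_add_right:
  assumes A: "smooth_atlas A" and L: "local_star_product A pb Mr"
    and sF: "\<And>n. smooth_fun A (F n)" and sG: "\<And>n. smooth_fun A (G n)" and sH: "\<And>n. smooth_fun A (H n)"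
  shows "star Mr H (\<lambda>n x. F n x + G n x) = (\<lambda>n x. star Mr H F n x + star Mr H G n x)"
proof (intro ext)
  fix n x
  have t: "Mr r (H s) (\<lambda>x. F t x + G t x) x = Mr r (H s) (F t) x + Mr r (H s) (G t) x" for r s t
    using lsp_add_right[OF L sF sG sH] by simp
  show "star Mr H (\<lambda>n x. F n x + G n x) n x = star Mr H F n x + star Mr H G n x"
    unfolding star_def t by (simp add: sum.distrib)
qed

lemma star_shift_right:
  assumes A: "smooth_atlas A" and L: "local_star_product A pb Mr"
    and sF: "\<And>n. smooth_fun A (F n)" and sG: "\<And>n. smooth_fun A (G n)"
  shows "star Mr F (shiftS N z G) = shiftS N z (star Mr F G)"
proof (intro ext)
  fix n x
  have t: "Mr r (F s) (shiftS N z G t) x = (if N \<le> t then z * Mr r (F s) (G (t - N)) x else 0)" for r s t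
  proof (cases "N \<le> t")
    case True
    then have "shiftS N z G t = (\<lambda>x. z * G (t - N) x)" by (simp add: shiftS_def)
    then show ?thesis using lsp_smult_right[OF L sG sF] True by simp
  next
    case False
    then have "shiftS N z G t = (\<lambda>x. 0)" by (simp add: shiftS_def)
    then show ?thesis using lsp_zero_right[OF L A sF] False by simp
  qed
  have e: "star Mr F (shiftS N z G) n x =
     (\<Sum>(r, s)\<in>PP n. if N \<le> n - r - s then z * Mr r (F s) (G (n - r - s - N)) x else 0)"
    unfolding star_pairs t by simp
  show "star Mr F (shiftS N z G) n x = shiftS N z (star Mr F G) n x"
  proof (cases "N \<le> n")
    case False
    have "(\<Sum>(r, s)\<in>PP n. if N \<le> n - r - s then z * Mr r (F s) (G (n - r - s - N)) x else 0) = 0"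
      by (rule sum.neutral) (use False in auto)
    then show ?thesis using e False by (simp add: shiftS_def)
  next
    case True
    define m where "m = n - N"
    have "(\<Sum>(r, s)\<in>PP n. if N \<le> n - r - s then z * Mr r (F s) (G (n - r - s - N)) x else 0)
        = (\<Sum>(r, s)\<in>PP m. z * Mr r (F s) (G (m - r - s)) x)"
    proof (rule sum.mono_neutral_cong_right[OF finite_PP])
      show "PP m \<subseteq> PP n" unfolding PP_def m_def by auto
      show "\<forall>i\<in>PP n - PP m. (case i of (r, s) \<Rightarrow> if N \<le> n - r - s then z * Mr r (F s) (G (n - r - s - N)) x else 0) = 0"
        unfolding PP_def m_def using True by (auto split: if_splits)
      fix p assume "p \<in> PP m"
      then show "(case p of (r, s) \<Rightarrow> if N \<le> n - r - s then z * Mr r (F s) (G (n - r - s - N)) x else 0)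
          = (case p of (r, s) \<Rightarrow> z * Mr r (F s) (G (m - r - s)) x)"
        unfolding PP_def m_def using True by (cases p) (auto simp: diff_diff_add add_ac)
    qed
    also have "\<dots> = z * star Mr F G m x"
      unfolding star_pairs by (simp add: sum_distrib_left case_prod_unfold)
    finally show ?thesis using e True by (simp add: shiftS_def m_def)
  qed
qed

lemma star_shift_left:
  assumes A: "smooth_atlas A" and L: "local_star_product A pb Mr"
    and sF: "\<And>n. smooth_fun A (F n)" and sG: "\<And>n. smooth_fun A (G n)"
  shows "star Mr (shiftS N z F) G = shiftS N z (star Mr F G)"
proof (intro ext)
  fix n x
  have t: "Mr r (shiftS N z F s) (G t) x = (if N \<le> s then z * Mr r (F (s - N)) (G t) x else 0)" for r s t
  proof (cases "N \<le> s")
    case True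
    then have "shiftS N z F s = (\<lambda>x. z * F (s - N) x)" by (simp add: shiftS_def)
    then show ?thesis using lsp_smult_left[OF L sF sG] True by simp
  next
    case False
    then have "shiftS N z F s = (\<lambda>x. 0)" by (simp add: shiftS_def)
    then show ?thesis using lsp_zero_left[OF L A sG] False by simp
  qed
  have e: "star Mr (shiftS N z F) G n x =
     (\<Sum>(r, s)\<in>PP n. if N \<le> s then z * Mr r (F (s - N)) (G (n - r - s)) x else 0)"
    unfolding star_pairs t by simp
  show "star Mr (shiftS N z F) G n x = shiftS N z (star Mr F G) n x"
  proof (cases "N \<le> n")
    case False
    have "(\<Sum>(r, s)\<in>PP n. if N \<le> s then z * Mr r (F (s - N)) (G (n - r - s)) x else 0) = 0"
      by (rule sum.neutral) (use False in \<open>auto simp: PP_def\<close>)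
    then show ?thesis using e False by (simp add: shiftS_def)
  next
    case True
    define m where "m = n - N"
    have "(\<Sum>(r, s)\<in>PP n. if N \<le> s then z * Mr r (F (s - N)) (G (n - r - s)) x else 0)
        = (\<Sum>(r, s)\<in>{p\<in>PP n. N \<le> snd p}. z * Mr r (F (s - N)) (G (n - r - s)) x)"
    proof (rule sum.mono_neutral_cong_right[OF finite_PP])
      show "{p\<in>PP n. N \<le> snd p} \<subseteq> PP n" by auto
      show "\<forall>i\<in>PP n - {p\<in>PP n. N \<le> snd p}. (case i of (r, s) \<Rightarrow> if N \<le> s then z * Mr r (F (s - N)) (G (n - r - s)) x else 0) = 0"
        by (auto split: if_splits)
      fix p assume "p \<in> {p\<in>PP n. N \<le> snd p}"
      then show "(case p of (r, s) \<Rightarrow> if N \<le> s then z * Mr r (F (s - N)) (G (n - r - s)) x else 0)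
          = (case p of (r, s) \<Rightarrow> z * Mr r (F (s - N)) (G (n - r - s)) x)"
        by (cases p) auto
    qed
    also have "\<dots> = (\<Sum>(r, s)\<in>PP m. z * Mr r (F s) (G (m - r - s)) x)"
    proof -
      let ?h = "\<lambda>(r::nat, s::nat). (r, s + N)"
      have bij: "bij_betw ?h (PP m) {p\<in>PP n. N \<le> snd p}"
        unfolding bij_betw_def
      proof
        show "inj_on ?h (PP m)" by (auto simp: inj_on_def)
        show "?h ` PP m = {p\<in>PP n. N \<le> snd p}"
        proof
          show "?h ` PP m \<subseteq> {p\<in>PP n. N \<le> snd p}" using True unfolding PP_def m_def by auto
          show "{p\<in>PP n. N \<le> snd p} \<subseteq> ?h ` PP m"
          proof
            fix p assume p: "p \<in> {p\<in>PP n. N \<le> snd p}"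
            obtain r s where rs: "p = (r, s)" by (cases p)
            have "(r, s - N) \<in> PP m" using p rs unfolding PP_def m_def by auto
            moreover have "p = ?h (r, s - N)" using p rs by auto
            ultimately show "p \<in> ?h ` PP m" by blast
          qed
        qed
      qed
      have "(\<Sum>(r, s)\<in>{p\<in>PP n. N \<le> snd p}. z * Mr r (F (s - N)) (G (n - r - s)) x)
          = (\<Sum>p\<in>PP m. (\<lambda>(r, s). z * Mr r (F (s - N)) (G (n - r - s)) x) (?h p))"
        using sum.reindex_bij_betw[OF bij, symmetric] by simp
      also have "\<dots> = (\<Sum>(r, s)\<in>PP m. z * Mr r (F s) (G (m - r - s)) x)"
      proof (rule sum.cong[OF refl])
        fix p assume "p \<in> PP m"
        show "(\<lambda>(r, s). z * Mr r (F (s - N)) (G (n - r - s)) x) (?h p) = (case p of (r, s) \<Rightarrow> z * Mr r (F s) (G (m - r - s)) x)"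
          using True by (cases p) (simp add: m_def add_ac)
      qed
      finally show ?thesis .
    qed
    also have "\<dots> = z * star Mr F G m x"
      unfolding star_pairs by (simp add: sum_distrib_left case_prod_unfold)
    finally show ?thesis using e True by (simp add: shiftS_def m_def)
  qed
qed

lemma star_zero:
  assumes A: "smooth_atlas A" and L: "local_star_product A pb Mr" and sG: "\<And>n. smooth_fun A (G n)"
  shows "star Mr (\<lambda>n x. 0) G = (\<lambda>n x. 0)"
  unfolding star_def using lsp_zero_left[OF L A sG] by simp

section \<open>Positive functionals\<close>

lemma pf_add:
  assumes "positive_functional A Mr \<omega>" "F \<in> C0_series A UNIV" "G \<in> C0_series A UNIV"
  shows "\<omega> (\<lambda>n x. F n x + G n x) = (\<lambda>n. \<omega> F n + \<omega> G n)"
  using assms unfolding positive_functional_def by blast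

lemma pf_shift:
  assumes "positive_functional A Mr \<omega>" "F \<in> C0_series A UNIV"
  shows "\<omega> (shiftS N z F) = shiftC N z (\<omega> F)"
proof -
  have "\<omega> (fps_smult (monoC N z) F) = fps_cmult (monoC N z) (\<omega> F)"
    using assms unfolding positive_functional_def by blast
  then show ?thesis by (simp add: fps_smult_mono fps_cmult_mono)
qed

lemma pf_nonneg:
  assumes "positive_functional A Mr \<omega>" "F \<in> C0_series A UNIV"
  shows "fps_nonneg (\<omega> (star Mr (series_cnj F) F))"
  using assms unfolding positive_functional_def by blast

lemma pf_zero:
  assumes "smooth_atlas A" "positive_functional A Mr \<omega>"
  shows "\<omega> (\<lambda>n x. 0) = (\<lambda>n. 0)"
proof -
  have "\<omega> (\<lambda>n x. (0::complex) + 0) = (\<lambda>n. \<omega> (\<lambda>n x. 0) n + \<omega> (\<lambda>n x. 0) n)"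
    by (rule pf_add[OF assms(2) C0_zero[OF assms(1)] C0_zero[OF assms(1)]])
  then have "\<And>n. \<omega> (\<lambda>n x. 0) n = \<omega> (\<lambda>n x. 0) n + \<omega> (\<lambda>n x. 0) n" by (simp add: fun_eq_iff)
  then show ?thesis by (simp add: fun_eq_iff)
qed

lemma complex_pos_form_zero:
  fixes \<alpha> \<beta> :: complex
  assumes "\<And>z. Im (z * \<beta> + cnj z * \<alpha>) = 0 \<and> Re (z * \<beta> + cnj z * \<alpha>) \<ge> 0"
  shows "\<alpha> = 0 \<and> \<beta> = 0"
proof -
  have e: "z * \<beta> + cnj z * \<alpha> = 0" for z
  proof -
    have 1: "Re (z * \<beta> + cnj z * \<alpha>) \<ge> 0" "Im (z * \<beta> + cnj z * \<alpha>) = 0" using assms[of z] by auto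
    have "Re ((- z) * \<beta> + cnj (- z) * \<alpha>) \<ge> 0" using assms[of "-z"] by auto
    then have "Re (z * \<beta> + cnj z * \<alpha>) \<le> 0" by simp
    with 1 show ?thesis by (simp add: complex_eq_iff)
  qed
  have a: "\<beta> + \<alpha> = 0" using e[of 1] by simp
  have b: "\<i> * \<beta> - \<i> * \<alpha> = 0" using e[of "\<i>"] by simp
  from a have "\<beta> = - \<alpha>" by (simp add: add_eq_0_iff)
  with b have "\<i> * \<alpha> = 0" by simp
  then have "\<alpha> = 0" by simp
  with \<open>\<beta> = - \<alpha>\<close> show ?thesis by simp
qed

lemma fps_nonneg_first:
  assumes "fps_nonneg v" "\<And>n. n < k \<Longrightarrow> v n = 0"
  shows "Im (v k) = 0 \<and> Re (v k) \<ge> 0"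
proof -
  have im: "Im (v k) = 0" using assms(1) unfolding fps_nonneg_def by blast
  show ?thesis
  proof (cases "v k = 0")
    case True then show ?thesis by simp
  next
    case False
    then have "v \<noteq> (\<lambda>n. 0)" by auto
    then have pos: "Re (v (LEAST n. v n \<noteq> 0)) > 0" using assms(1) unfolding fps_nonneg_def by blast
    have "(LEAST n. v n \<noteq> 0) = k"
    proof (rule Least_equality)
      show "v k \<noteq> 0" by fact
      fix y assume "v y \<noteq> 0" then show "k \<le> y" using assms(2) not_less by blast
    qed
    then show ?thesis using pos im by simp
  qed
qed

lemma cauchy_schwarz_zero:
  assumes A: "smooth_atlas A" and L: "local_star_product A pb Mr" and P: "positive_functional A Mr \<omega>"
    and F: "F \<in> C0_series A UNIV" and G: "G \<in> C0_series A UNIV"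
    and F0: "\<omega> (star Mr (series_cnj F) F) = (\<lambda>n. 0)"
  shows "\<omega> (star Mr (series_cnj G) F) = (\<lambda>n. 0)"
proof (rule ccontr)
  define a where "a = \<omega> (star Mr (series_cnj G) F)"
  define b where "b = \<omega> (star Mr (series_cnj F) G)"
  define c where "c = \<omega> (star Mr (series_cnj G) G)"
  assume "\<omega> (star Mr (series_cnj G) F) \<noteq> (\<lambda>n. 0)"
  then obtain n0 where "a n0 \<noteq> 0" unfolding a_def by auto
  then have ex: "\<exists>n. a n \<noteq> 0 \<or> b n \<noteq> 0" by blast
  define m where "m = (LEAST n. a n \<noteq> 0 \<or> b n \<noteq> 0)"
  have m1: "a m \<noteq> 0 \<or> b m \<noteq> 0" unfolding m_def by (rule LeastI_ex[OF ex])
  have m2: "a n = 0 \<and> b n = 0" if "n < m" for n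
    using not_less_Least[OF that[unfolded m_def]] by blast
  define N where "N = Suc m"
  have FC: "series_cnj F \<in> C0_series A UNIV" and GC: "series_cnj G \<in> C0_series A UNIV"
    using C0_cnj[OF A F] C0_cnj[OF A G] by auto
  have sF: "\<And>n. smooth_fun A (F n)" and sG: "\<And>n. smooth_fun A (G n)"
    and sFc: "\<And>n. smooth_fun A (series_cnj F n)" and sGc: "\<And>n. smooth_fun A (series_cnj G n)"
    using C0D[OF F] C0D[OF G] C0D[OF FC] C0D[OF GC] by auto
  have key: "Im (z * b m + cnj z * a m) = 0 \<and> Re (z * b m + cnj z * a m) \<ge> 0" for z
  proof -
    define H where "H = (\<lambda>n x. F n x + shiftS N z G n x)"
    have SG: "shiftS N z G \<in> C0_series A UNIV" using C0_shift[OF A G] .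
    have SGc: "shiftS N (cnj z) (series_cnj G) \<in> C0_series A UNIV" using C0_shift[OF A GC] .
    have sSG: "\<And>n. smooth_fun A (shiftS N z G n)" using C0D[OF SG] by auto
    have sSGc: "\<And>n. smooth_fun A (shiftS N (cnj z) (series_cnj G) n)" using C0D[OF SGc] by auto
    have HC: "H \<in> C0_series A UNIV" unfolding H_def by (rule C0_add[OF A F SG])
    have cH: "series_cnj H = (\<lambda>n x. series_cnj F n x + shiftS N (cnj z) (series_cnj G) n x)"
      unfolding H_def series_cnj_def shiftS_def by (auto simp: fun_eq_iff)
    define X1 where "X1 = star Mr (series_cnj F) F"
    define X2 where "X2 = shiftS N z (star Mr (series_cnj F) G)"
    define X3 where "X3 = shiftS N (cnj z) (star Mr (series_cnj G) F)"
    define X4 where "X4 = shiftS N (cnj z) (shiftS N z (star Mr (series_cnj G) G))"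
    have e1: "star Mr (series_cnj H) H = (\<lambda>n x. (X1 n x + X2 n x) + (X3 n x + X4 n x))"
    proof -
      have "star Mr (series_cnj H) H =
        (\<lambda>n x. star Mr (series_cnj F) H n x + star Mr (shiftS N (cnj z) (series_cnj G)) H n x)"
        unfolding cH by (rule star_add_left[OF A L sFc sSGc]) (simp add: H_def smooth_fun_add[OF A sF sSG])
      also have "star Mr (series_cnj F) H = (\<lambda>n x. X1 n x + X2 n x)"
        unfolding H_def X1_def X2_def star_add_right[OF A L sF sSG sFc] star_shift_right[OF A L sFc sG] ..
      also have "star Mr (shiftS N (cnj z) (series_cnj G)) H = (\<lambda>n x. X3 n x + X4 n x)"
        unfolding H_def X3_def X4_def star_add_right[OF A L sF sSG sSGc] star_shift_left[OF A L sGc sF]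
          star_shift_left[OF A L sGc sSG] star_shift_right[OF A L sGc sG] ..
      finally show ?thesis .
    qed
    have C1: "X1 \<in> C0_series A UNIV" unfolding X1_def by (rule C0_star[OF A L FC F])
    have C2: "X2 \<in> C0_series A UNIV" unfolding X2_def by (rule C0_shift[OF A C0_star[OF A L FC G]])
    have C3: "X3 \<in> C0_series A UNIV" unfolding X3_def by (rule C0_shift[OF A C0_star[OF A L GC F]])
    have C4: "X4 \<in> C0_series A UNIV" unfolding X4_def by (rule C0_shift[OF A C0_shift[OF A C0_star[OF A L GC G]]])
    define v where "v = \<omega> (star Mr (series_cnj H) H)"
    have "v = (\<lambda>n. (\<omega> X1 n + \<omega> X2 n) + (\<omega> X3 n + \<omega> X4 n))"
      unfolding v_def e1
      using pf_add[OF P C0_add[OF A C1 C2] C0_add[OF A C3 C4]] pf_add[OF P C1 C2] pf_add[OF P C3 C4]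
      by simp
    also have "\<dots> = (\<lambda>n. (0 + shiftC N z b n) + (shiftC N (cnj z) a n + shiftC N (cnj z) (shiftC N z c) n))"
      unfolding X2_def X3_def X4_def
      using pf_shift[OF P C0_star[OF A L FC G]] pf_shift[OF P C0_star[OF A L GC F]]
        pf_shift[OF P C0_shift[OF A C0_star[OF A L GC G]]] pf_shift[OF P C0_star[OF A L GC G]]
      unfolding X1_def F0 a_def b_def c_def by simp
    finally have v: "v = (\<lambda>n. (0 + shiftC N z b n) + (shiftC N (cnj z) a n + shiftC N (cnj z) (shiftC N z c) n))" .
    have nn: "fps_nonneg v" unfolding v_def by (rule pf_nonneg[OF P HC])
    have low: "v n = 0" if "n < N + m" for n
    proof -
      have "shiftC N z b n = 0" using m2[of "n - N"] that unfolding shiftC_def N_def by auto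
      moreover have "shiftC N (cnj z) a n = 0" using m2[of "n - N"] that unfolding shiftC_def N_def by auto
      moreover have "shiftC N (cnj z) (shiftC N z c) n = 0" using that unfolding shiftC_def N_def by auto
      ultimately show ?thesis using v by simp
    qed
    have top: "v (N + m) = z * b m + cnj z * a m"
      using v unfolding shiftC_def N_def by simp
    have "Im (v (N + m)) = 0 \<and> Re (v (N + m)) \<ge> 0" using fps_nonneg_first[OF nn, of "N + m"] low by blast
    then show ?thesis unfolding top .
  qed
  have "a m = 0 \<and> b m = 0" by (rule complex_pos_form_zero[OF key])
  then show False using m1 by simp
qed

lemma atlas_trans:
  assumes "smooth_atlas A" "(U, \<phi>) \<in> A" "(V, \<psi>) \<in> A"
  shows "smooth_on (\<phi> ` (U \<inter> V)) (\<psi> \<circ> inv_into U \<phi>)"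
proof -
  have X: "\<forall>(U,\<phi>)\<in>A. \<forall>(V,\<psi>)\<in>A. smooth_on (\<phi> ` (U \<inter> V)) (\<psi> \<circ> inv_into U \<phi>)"
    using assms(1) unfolding smooth_atlas_def by (elim conjE)
  have "case (U, \<phi>) of (U, \<phi>) \<Rightarrow> \<forall>(V,\<psi>)\<in>A. smooth_on (\<phi> ` (U \<inter> V)) (\<psi> \<circ> inv_into U \<phi>)"
    by (rule bspec[OF X assms(2)])
  then have Y: "\<forall>(V,\<psi>)\<in>A. smooth_on (\<phi> ` (U \<inter> V)) (\<psi> \<circ> inv_into U \<phi>)" by simp
  have "case (V, \<psi>) of (V, \<psi>) \<Rightarrow> smooth_on (\<phi> ` (U \<inter> V)) (\<psi> \<circ> inv_into U \<phi>)"
    by (rule bspec[OF Y assms(3)])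
  then show ?thesis by simp
qed

lemma bump_exists:
  fixes A :: "('m::t2_space set \<times> ('m \<Rightarrow> 'e::euclidean_space)) set"
  assumes A: "smooth_atlas A" and W: "open W" "p \<in> W"
  shows "\<exists>f. smooth_fun A f \<and> compact (fsupp f) \<and> fsupp f \<subseteq> W \<and> f p \<noteq> 0"
proof -
  obtain U \<phi> where UA: "(U, \<phi>) \<in> A" and pU: "p \<in> U" using chart_cover[OF A] by blast
  define c where "c = \<phi> p"
  have "open (\<phi> ` (U \<inter> W))" by (rule chart_open_image[OF A UA W(1)])
  moreover have "c \<in> \<phi> ` (U \<inter> W)" unfolding c_def using pU W(2) by blast
  ultimately obtain r where r: "r > 0" "cball c r \<subseteq> \<phi> ` (U \<inter> W)"
    using open_contains_cball by blast
  define K where "K = inv_into U \<phi> ` cball c r"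
  have hom: "homeomorphism U (\<phi> ` U) \<phi> (inv_into U \<phi>)" by (rule chartD(3)[OF A UA])
  have KUW: "K \<subseteq> U \<inter> W"
  proof
    fix x assume "x \<in> K"
    then obtain y where y: "y \<in> cball c r" "x = inv_into U \<phi> y" unfolding K_def by blast
    then obtain x' where x': "x' \<in> U \<inter> W" "y = \<phi> x'" using r(2) by blast
    then have "x = x'" using y chart_inv[OF A UA] by simp
    then show "x \<in> U \<inter> W" using x' by simp
  qed
  have cK: "compact K"
  proof -
    have "continuous_on (\<phi> ` U) (inv_into U \<phi>)" using hom unfolding homeomorphism_def by blast
    moreover have "cball c r \<subseteq> \<phi> ` U" using r(2) by blast
    ultimately have "continuous_on (cball c r) (inv_into U \<phi>)" by (rule continuous_on_subset)
    then show ?thesis unfolding K_def by (rule compact_continuous_image) simp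
  qed
  have clK: "closed K" using cK by (rule compact_imp_closed)
  define q where "q = (\<lambda>y::'e. r\<^sup>2 - inner (y - c) (y - c))"
  define f where "f = (\<lambda>x. if x \<in> U then complex_of_real (bk 0 (q (\<phi> x))) else 0)"
  have fK: "x \<in> K" if "f x \<noteq> 0" for x
  proof -
    have xU: "x \<in> U" and b: "bk 0 (q (\<phi> x)) \<noteq> 0" using that unfolding f_def by (auto split: if_splits)
    have "q (\<phi> x) > 0" using b bk_zero[of "q (\<phi> x)" 0] by force
    then have "(norm (\<phi> x - c))\<^sup>2 < r\<^sup>2" unfolding q_def by (simp add: power2_norm_eq_inner)
    then have "norm (\<phi> x - c) \<le> r" using r(1) by (smt (verit) norm_ge_zero power_mono)
    then have "\<phi> x \<in> cball c r" by (simp add: dist_norm norm_minus_commute)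
    then show "x \<in> K" unfolding K_def using chart_inv[OF A UA xU] by (metis image_eqI)
  qed
  have sK: "fsupp f \<subseteq> K" by (rule fsupp_subset[OF clK fK])
  have fp: "f p \<noteq> 0"
  proof -
    have "q (\<phi> p) = r\<^sup>2" unfolding q_def c_def by simp
    then have "bk 0 (q (\<phi> p)) > 0" using bk_pos r(1) by simp
    then show ?thesis unfolding f_def using pU by simp
  qed
  have sm: "smooth_fun A f"
  proof (rule smooth_fun_localI[OF A])
    fix V \<psi> x assume VA: "(V, \<psi>) \<in> A" and xV: "x \<in> V"
    show "\<exists>N. open N \<and> x \<in> N \<and> (\<forall>n. Ck n (\<psi> ` (V \<inter> N)) (\<lambda>y. f (inv_into V \<psi> y)))"
    proof (cases "x \<in> U")
      case True
      have oS: "open (\<psi> ` (V \<inter> U))" by (rule chart_open_image[OF A VA chartD(1)[OF A UA]])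
      have T: "Ck n (\<psi> ` (V \<inter> U)) (\<lambda>y. \<phi> (inv_into V \<psi> y))" for n
        using atlas_trans[OF A VA UA] smooth_on_Cinf[OF oS] unfolding Cinf_def o_def by blast
      have T1: "Ck n (\<psi> ` (V \<inter> U)) (\<lambda>y. \<phi> (inv_into V \<psi> y) + (- c))" for n
        by (rule Ck_add[OF oS T Ck_const[OF oS]])
      have T2: "Ck n (\<psi> ` (V \<inter> U)) (\<lambda>y. inner (\<phi> (inv_into V \<psi> y) + (- c)) (\<phi> (inv_into V \<psi> y) + (- c)))" for n
        by (rule Ck_bilinear[OF oS bounded_bilinear_inner T1 T1])
      have T3: "Ck n (\<psi> ` (V \<inter> U)) (\<lambda>y. r\<^sup>2 + (- inner (\<phi> (inv_into V \<psi> y) + (- c)) (\<phi> (inv_into V \<psi> y) + (- c))))" for n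
        by (rule Ck_add[OF oS Ck_const[OF oS] Ck_linear[OF oS bounded_linear_minus[OF bounded_linear_ident] T2]])
      have qeq: "r\<^sup>2 + (- inner (\<phi> (inv_into V \<psi> y) + (- c)) (\<phi> (inv_into V \<psi> y) + (- c))) = q (\<phi> (inv_into V \<psi> y))" for y
        unfolding q_def by simp
      have T4: "Ck n (\<psi> ` (V \<inter> U)) (\<lambda>y. q (\<phi> (inv_into V \<psi> y)))" for n
        using T3 unfolding qeq .
      have T5: "Ck n (\<psi> ` (V \<inter> U)) (\<lambda>y. bk 0 (q (\<phi> (inv_into V \<psi> y))))" for n
        by (rule Ck_compose_real[where g=bk, OF oS T4 bk_deriv])
      have T6: "Ck n (\<psi> ` (V \<inter> U)) (\<lambda>y. complex_of_real (bk 0 (q (\<phi> (inv_into V \<psi> y)))))" for n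
        by (rule Ck_linear[OF oS bounded_linear_of_real T5])
      have "Ck n (\<psi> ` (V \<inter> U)) (\<lambda>y. f (inv_into V \<psi> y))" for n
      proof (rule Ck_cong[OF oS T6])
        fix y assume "y \<in> \<psi> ` (V \<inter> U)"
        then obtain x' where x': "x' \<in> V" "x' \<in> U" "y = \<psi> x'" by blast
        then have "inv_into V \<psi> y = x'" using chart_inv[OF A VA] by simp
        then show "complex_of_real (bk 0 (q (\<phi> (inv_into V \<psi> y)))) = f (inv_into V \<psi> y)"
          unfolding f_def using x' by simp
      qed
      then show ?thesis using True chartD(1)[OF A UA] by blast
    next
      case False
      have oN: "open (- K)" using clK by (simp add: open_Compl)
      have "x \<in> - K" using False KUW by blast
      moreover have "Ck n (\<psi> ` (V \<inter> - K)) (\<lambda>y. f (inv_into V \<psi> y))" for n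
      proof (rule smooth_fun_local_Ck[OF A VA oN smooth_fun_const[OF A]])
        fix x assume "x \<in> - K" then show "f x = 0" using fK by blast
      qed
      ultimately show ?thesis using oN by blast
    qed
  qed
  show ?thesis
  proof (intro exI conjI)
    show "smooth_fun A f" by (rule sm)
    show "compact (fsupp f)" by (rule compact_closed_subset[OF cK fsupp_closed sK])
    show "fsupp f \<subseteq> W" using sK KUW by blast
    show "f p \<noteq> 0" by (rule fp)
  qed
qed

primrec seqrec :: "((nat \<Rightarrow> 'a) \<Rightarrow> nat \<Rightarrow> 'a) \<Rightarrow> nat \<Rightarrow> nat \<Rightarrow> 'a" where
  "seqrec \<Phi> 0 = (\<lambda>s. \<Phi> (\<lambda>_. undefined) 0)"
| "seqrec \<Phi> (Suc n) = (seqrec \<Phi> n)(Suc n := \<Phi> (seqrec \<Phi> n) (Suc n))"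

lemma seqrec_stable: "s \<le> n \<Longrightarrow> seqrec \<Phi> n s = seqrec \<Phi> s s"
proof (induction n)
  case 0 then show ?case by simp
next
  case (Suc n)
  show ?case
  proof (cases "s = Suc n")
    case True then show ?thesis by simp
  next
    case False
    then have "s \<le> n" using Suc.prems by simp
    then show ?thesis using Suc.IH False by simp
  qed
qed

lemma rec_exists:
  fixes \<Phi> :: "(nat \<Rightarrow> 'a) \<Rightarrow> nat \<Rightarrow> 'a"
  assumes dep: "\<And>K K' m. (\<And>s. s < m \<Longrightarrow> K s = K' s) \<Longrightarrow> \<Phi> K m = \<Phi> K' m"
  shows "\<exists>K. \<forall>m. K m = \<Phi> K m"
proof (intro exI allI)
  define K where "K = (\<lambda>m. seqrec \<Phi> m m)"
  fix m
  show "K m = \<Phi> K m"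
  proof (cases m)
    case 0
    have "K 0 = \<Phi> (\<lambda>_. undefined) 0" unfolding K_def by simp
    also have "\<dots> = \<Phi> K 0" by (rule dep) simp
    finally show ?thesis using 0 by simp
  next
    case (Suc n)
    have "K (Suc n) = \<Phi> (seqrec \<Phi> n) (Suc n)" unfolding K_def by simp
    also have "\<dots> = \<Phi> K (Suc n)"
    proof (rule dep)
      fix s assume "s < Suc n"
      then have "s \<le> n" by simp
      then show "seqrec \<Phi> n s = K s" unfolding K_def by (rule seqrec_stable)
    qed
    finally show ?thesis using Suc by simp
  qed
qed

lemma smooth_fun_diff:
  assumes "smooth_atlas A" "smooth_fun A f" "smooth_fun A g"
  shows "smooth_fun A (\<lambda>x. f x - g x)"
proof -
  have "smooth_fun A (\<lambda>x. f x + (-1) * g x)"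
    by (rule smooth_fun_add[OF assms(1,2) smooth_fun_cmult[OF assms(1,3)]])
  then show ?thesis by simp
qed

lemma supp_faithful_core:
  fixes A :: "('m::t2_space set \<times> ('m \<Rightarrow> 'e::euclidean_space)) set"
  assumes A: "smooth_atlas A" and L: "local_star_product A pb Mr" and P: "positive_functional A Mr \<omega>"
    and FC: "F \<in> C0_series A UNIV" and F0: "\<omega> (star Mr (series_cnj F) F) = (\<lambda>n. 0)"
    and Fne: "F \<noteq> (\<lambda>n x. 0)" and supp: "functional_supp A \<omega> = UNIV"
  shows False
proof -
  have sF: "\<And>n. smooth_fun A (F n)" using C0D[OF FC] by blast
  have ex: "\<exists>k. F k \<noteq> (\<lambda>x. 0)"
  proof (rule ccontr)
    assume "\<not> ?thesis"
    then have "\<forall>k. F k = (\<lambda>x. 0)" by blast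
    then have "F = (\<lambda>n x. 0)" by (simp add: fun_eq_iff)
    then show False using Fne by simp
  qed
  define k where "k = (LEAST k. F k \<noteq> (\<lambda>x. 0))"
  have Fk: "F k \<noteq> (\<lambda>x. 0)" unfolding k_def by (rule LeastI_ex[OF ex])
  have Flow: "F j = (\<lambda>x. 0)" if "j < k" for j
    using not_less_Least[OF that[unfolded k_def]] by blast
  obtain p where Fkp: "F k p \<noteq> 0" using Fk by (auto simp: fun_eq_iff)
  define Oz where "Oz = {x. F k x \<noteq> 0}"
  have oO: "open Oz" unfolding Oz_def
    by (rule open_Collect_neq[OF smooth_fun_cont[OF A sF] continuous_on_const])
  have pO: "p \<in> Oz" unfolding Oz_def using Fkp by simp
  have "\<exists>h\<in>C0_series A Oz. \<omega> h \<noteq> (\<lambda>n. 0)"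
  proof (rule ccontr)
    assume "\<not> ?thesis"
    then have "\<forall>h\<in>C0_series A Oz. \<omega> h = (\<lambda>n. 0)" by blast
    then have "Oz \<in> {W. open W \<and> (\<forall>F\<in>C0_series A W. \<omega> F = (\<lambda>n. 0))}" using oO by blast
    then have "p \<notin> functional_supp A \<omega>" unfolding functional_supp_def using pO by blast
    then show False using supp by simp
  qed
  then obtain h where hC: "h \<in> C0_series A Oz" and hne: "\<omega> h \<noteq> (\<lambda>n. 0)" by blast
  have sh: "\<And>n. smooth_fun A (h n)" and ch: "\<And>n. compact (fsupp (h n))" and hO: "\<And>n. fsupp (h n) \<subseteq> Oz"
    using C0D[OF hC] by blast+
  define Ls where "Ls m = (\<Union>j\<le>m. fsupp (h j))" for m
  have Ls_compact: "compact (Ls m)" for m unfolding Ls_def using ch by blast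
  have Ls_closed: "closed (Ls m)" for m unfolding Ls_def using fsupp_closed by blast
  have Ls_O: "Ls m \<subseteq> Oz" for m unfolding Ls_def using hO by blast
  have Ls_mono: "Ls s \<subseteq> Ls m" if "s \<le> m" for s m unfolding Ls_def using that by (meson UN_mono atMost_iff order.trans order_refl subsetI)
  have h_out: "h m x = 0" if "x \<notin> Ls m" for m x
    using that not_in_fsupp unfolding Ls_def by blast
  define Sm where "Sm K m x = (\<Sum>r\<le>m + k. \<Sum>s\<in>{s. s \<le> m + k - r \<and> s < m}. Mr r (K s) (F (m + k - r - s)) x)"
    for K :: "nat \<Rightarrow> 'm \<Rightarrow> complex" and m x
  define \<Phi> where "\<Phi> K m = (\<lambda>x. if x \<in> Oz then (h m x - Sm K m x) / F k x else 0)"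
    for K :: "nat \<Rightarrow> 'm \<Rightarrow> complex" and m
  have dep: "\<Phi> K m = \<Phi> K' m" if "\<And>s. s < m \<Longrightarrow> K s = K' s" for K K' m
  proof -
    have e: "Sm K m x = Sm K' m x" for x unfolding Sm_def using that by (intro sum.cong) auto
    show ?thesis unfolding \<Phi>_def by (intro ext) (simp only: e)
  qed
  obtain K where KPhi: "\<And>m. K m = \<Phi> K m" using rec_exists[of \<Phi>] dep by blast
  have inv: "smooth_fun A (K m) \<and> (\<forall>x. x \<notin> Ls m \<longrightarrow> K m x = 0) \<and> (\<forall>x. x \<notin> Ls m \<longrightarrow> h m x - Sm K m x = 0)" for m
  proof (induction m rule: less_induct)
    case (less m)
    have sKs: "smooth_fun A (K s)" if "s < m" for s using less that by blast
    have zKs: "K s x = 0" if "s < m" "x \<notin> Ls s" for s x using less that by blast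
    define R where "R = (\<lambda>x. h m x - Sm K m x)"
    have Km: "K m = (\<lambda>x. if x \<in> Oz then R x / F k x else 0)"
      using KPhi[of m] unfolding \<Phi>_def R_def by simp
    have sS: "smooth_fun A (Sm K m)"
    proof -
      have "smooth_fun A (\<lambda>x. \<Sum>r\<le>m + k. \<Sum>s\<in>{s. s \<le> m + k - r \<and> s < m}. Mr r (K s) (F (m + k - r - s)) x)"
      proof (rule smooth_fun_sum[OF A])
        fix r assume "r \<in> {..m + k}"
        show "smooth_fun A (\<lambda>x. \<Sum>s\<in>{s. s \<le> m + k - r \<and> s < m}. Mr r (K s) (F (m + k - r - s)) x)"
        proof (rule smooth_fun_sum[OF A])
          fix s assume "s \<in> {s. s \<le> m + k - r \<and> s < m}"
          then show "smooth_fun A (Mr r (K s) (F (m + k - r - s)))"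
            using lsp_smooth[OF L sKs sF] by simp
        qed
      qed
      then show ?thesis unfolding Sm_def by (simp add: fun_eq_iff)
    qed
    have sR: "smooth_fun A R" unfolding R_def by (rule smooth_fun_diff[OF A sh sS])
    have zR: "R x = 0" if "x \<notin> Ls m" for x
    proof -
      have "Sm K m x = 0" unfolding Sm_def
      proof (intro sum.neutral ballI)
        fix r s assume "s \<in> {s. s \<le> m + k - r \<and> s < m}"
        then have sm: "s < m" by simp
        have oc: "open (- Ls s)" using Ls_closed by (simp add: open_Compl)
        have z: "\<forall>y\<in>- Ls s. K s y = 0" using zKs[OF sm] by blast
        have "x \<in> - Ls s" using that Ls_mono[of s m] sm by auto
        then show "Mr r (K s) (F (m + k - r - s)) x = 0"
          using lsp_local[OF L sKs[OF sm] sF oc z] by blast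
      qed
      then show ?thesis unfolding R_def using h_out[OF that] by simp
    qed
    have zK: "K m x = 0" if "x \<notin> Ls m" for x using zR[OF that] Km by simp
    have sK: "smooth_fun A (K m)"
    proof (rule smooth_fun_localI[OF A])
      fix V \<psi> x assume VA: "(V, \<psi>) \<in> A" and xV: "x \<in> V"
      show "\<exists>N. open N \<and> x \<in> N \<and> (\<forall>n. Ck n (\<psi> ` (V \<inter> N)) (\<lambda>y. K m (inv_into V \<psi> y)))"
      proof (cases "x \<in> Oz")
        case True
        have oS: "open (\<psi> ` (V \<inter> Oz))" by (rule chart_open_image[OF A VA oO])
        have sub: "\<psi> ` (V \<inter> Oz) \<subseteq> \<psi> ` V" by blast
        have C1: "Ck n (\<psi> ` (V \<inter> Oz)) (\<lambda>y. R (inv_into V \<psi> y))" for n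
          by (rule Ck_subset[OF smooth_funD[OF A sR VA] sub])
        have C2: "Ck n (\<psi> ` (V \<inter> Oz)) (\<lambda>y. F k (inv_into V \<psi> y))" for n
          by (rule Ck_subset[OF smooth_funD[OF A sF VA] sub])
        have nz: "F k (inv_into V \<psi> y) \<noteq> 0" if yin: "y \<in> \<psi> ` (V \<inter> Oz)" for y
        proof -
          obtain x' where "x' \<in> V" "x' \<in> Oz" "y = \<psi> x'" using yin by blast
          then show ?thesis using chart_inv[OF A VA] unfolding Oz_def by simp
        qed
        have C3: "Ck n (\<psi> ` (V \<inter> Oz)) (\<lambda>y. inverse (F k (inv_into V \<psi> y)))" for n
          by (rule Ck_inverse[OF oS C2 nz])
        have C4: "Ck n (\<psi> ` (V \<inter> Oz)) (\<lambda>y. R (inv_into V \<psi> y) * inverse (F k (inv_into V \<psi> y)))" for n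
          by (rule Ck_mult[OF oS C1 C3])
        have "Ck n (\<psi> ` (V \<inter> Oz)) (\<lambda>y. K m (inv_into V \<psi> y))" for n
        proof (rule Ck_cong[OF oS C4])
          fix y assume "y \<in> \<psi> ` (V \<inter> Oz)"
          then obtain x' where x': "x' \<in> V" "x' \<in> Oz" "y = \<psi> x'" by blast
          then have "inv_into V \<psi> y = x'" using chart_inv[OF A VA] by simp
          then show "R (inv_into V \<psi> y) * inverse (F k (inv_into V \<psi> y)) = K m (inv_into V \<psi> y)"
            using x' Km by (simp add: divide_inverse)
        qed
        then show ?thesis using True oO by blast
      next
        case False
        have oN: "open (- Ls m)" using Ls_closed by (simp add: open_Compl)
        have "x \<in> - Ls m" using False Ls_O by blast
        moreover have "Ck n (\<psi> ` (V \<inter> - Ls m)) (\<lambda>y. K m (inv_into V \<psi> y))" for n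
        proof (rule smooth_fun_local_Ck[OF A VA oN smooth_fun_const[OF A]])
          fix x assume "x \<in> - Ls m" then show "K m x = 0" using zK by blast
        qed
        ultimately show ?thesis using oN by blast
      qed
    qed
    show ?case using sK zK zR unfolding R_def by blast
  qed
  have sK: "\<And>m. smooth_fun A (K m)" using inv by blast
  have fK: "fsupp (K m) \<subseteq> Ls m" for m
    by (rule fsupp_subset[OF Ls_closed]) (use inv in blast)
  have KC: "K \<in> C0_series A UNIV"
    by (rule C0I[OF sK]) (use compact_closed_subset[OF Ls_compact fsupp_closed fK] in auto)
  have Kmul: "K m x * F k x = h m x - Sm K m x" for m x
  proof (cases "x \<in> Oz")
    case True
    then have "F k x \<noteq> 0" unfolding Oz_def by simp
    then show ?thesis using True KPhi[of m] unfolding \<Phi>_def by simp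
  next
    case False
    then have "x \<notin> Ls m" using Ls_O by blast
    then have "K m x = 0" using inv by blast
    moreover have "h m x - Sm K m x = 0" using inv \<open>x \<notin> Ls m\<close> by blast
    ultimately show ?thesis by simp
  qed
  have T0: "Mr r (K s) (F j) x = 0" if "j < k" for r s j x
    using Flow[OF that] lsp_zero_right[OF L A sK] by simp
  have star_eq: "star Mr K F = shiftS k 1 h"
  proof (intro ext)
    fix n x
    show "star Mr K F n x = shiftS k 1 h n x"
    proof (cases "k \<le> n")
      case False
      have "star Mr K F n x = 0" unfolding star_def
      proof (intro sum.neutral ballI)
        fix r s assume "r \<in> {..n}" "s \<in> {..n - r}"
        have "n - r - s < k" using False by simp
        then show "Mr r (K s) (F (n - r - s)) x = 0" by (rule T0)
      qed
      then show ?thesis using False by (simp add: shiftS_def)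
    next
      case True
      define m where "m = n - k"
      have nmk: "n = m + k" using True unfolding m_def by simp
      define T where "T r s = Mr r (K s) (F (n - r - s)) x" for r s
      have split: "(\<Sum>s\<le>n - r. T r s) = (\<Sum>s\<in>{s. s \<le> n - r \<and> s < m}. T r s) + (if r = 0 then K m x * F k x else 0)"
        if "r \<le> n" for r
      proof -
        define A1 where "A1 = {s. s \<le> n - r \<and> s < m}"
        define A2 where "A2 = {s. s \<le> n - r \<and> \<not> s < m}"
        have f1: "finite A1" "finite A2" unfolding A1_def A2_def by auto
        have un: "{..n - r} = A1 \<union> A2" unfolding A1_def A2_def by auto
        have "(\<Sum>s\<le>n - r. T r s) = (\<Sum>s\<in>A1. T r s) + (\<Sum>s\<in>A2. T r s)"
          unfolding un by (rule sum.union_disjoint[OF f1]) (auto simp: A1_def A2_def)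
        moreover have "(\<Sum>s\<in>A2. T r s) = (if r = 0 then K m x * F k x else 0)"
        proof (cases "r = 0")
          case True
          have "(\<Sum>s\<in>A2. T r s) = (\<Sum>s\<in>A2. if s = m then K m x * F k x else 0)"
          proof (rule sum.cong[OF refl])
            fix s assume "s \<in> A2"
            then have s: "s \<le> n" "m \<le> s" unfolding A2_def using True by auto
            show "T r s = (if s = m then K m x * F k x else 0)"
            proof (cases "s = m")
              case True
              then have "n - r - s = k" using nmk \<open>r = 0\<close> by simp
              then show ?thesis unfolding T_def using True \<open>r = 0\<close> lsp_M0[OF L sK sF] by simp
            next
              case False
              then have "n - r - s < k" using nmk s by simp
              then show ?thesis unfolding T_def using False T0 by simp
            qed
          qed
          also have "\<dots> = K m x * F k x" using f1(2) nmk True unfolding A2_def by simp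
          finally show ?thesis using True by simp
        next
          case False
          have "(\<Sum>s\<in>A2. T r s) = 0"
          proof (intro sum.neutral ballI)
            fix s assume "s \<in> A2"
            then have "n - r - s < k" using nmk False that unfolding A2_def by auto
            then show "T r s = 0" unfolding T_def by (rule T0)
          qed
          then show ?thesis using False by simp
        qed
        ultimately show ?thesis unfolding A1_def by simp
      qed
      have "star Mr K F n x = (\<Sum>r\<le>n. (\<Sum>s\<in>{s. s \<le> n - r \<and> s < m}. T r s) + (if r = 0 then K m x * F k x else 0))"
        unfolding star_def T_def[symmetric] by (rule sum.cong[OF refl]) (use split in simp)
      also have "\<dots> = (\<Sum>r\<le>n. \<Sum>s\<in>{s. s \<le> n - r \<and> s < m}. T r s) + K m x * F k x"
        by (simp add: sum.distrib)
      also have "(\<Sum>r\<le>n. \<Sum>s\<in>{s. s \<le> n - r \<and> s < m}. T r s) = Sm K m x"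
        unfolding Sm_def T_def nmk by simp
      also have "Sm K m x + K m x * F k x = h m x" using Kmul[of m x] by simp
      finally show ?thesis using True unfolding shiftS_def m_def by simp
    qed
  qed
  have GC: "series_cnj K \<in> C0_series A UNIV" by (rule C0_cnj[OF A KC])
  have cc: "series_cnj (series_cnj K) = K" by (simp add: series_cnj_def)
  have "\<omega> (star Mr (series_cnj (series_cnj K)) F) = (\<lambda>n. 0)"
    by (rule cauchy_schwarz_zero[OF A L P FC GC F0])
  then have z1: "\<omega> (shiftS k 1 h) = (\<lambda>n. 0)" using cc star_eq by simp
  have "\<omega> (shiftS k 1 h) = shiftC k 1 (\<omega> h)" by (rule pf_shift[OF P C0_mono[OF hC subset_UNIV]])
  then have z2: "shiftC k 1 (\<omega> h) = (\<lambda>n. 0)" using z1 by simp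
  have "\<omega> h n = 0" for n
  proof -
    have "shiftC k 1 (\<omega> h) (n + k) = 0" using z2 by simp
    then show ?thesis unfolding shiftC_def by simp
  qed
  then have "\<omega> h = (\<lambda>n. 0)" by (simp add: fun_eq_iff)
  then show False using hne by simp
qed

theorem proposition6:
  fixes A :: "('m::{t2_space, second_countable_topology} set \<times> ('m \<Rightarrow> 'e::euclidean_space)) set"
    and pb :: "('m \<Rightarrow> complex) \<Rightarrow> ('m \<Rightarrow> complex) \<Rightarrow> ('m \<Rightarrow> complex)"
    and Mr :: "nat \<Rightarrow> ('m \<Rightarrow> complex) \<Rightarrow> ('m \<Rightarrow> complex) \<Rightarrow> ('m \<Rightarrow> complex)"
    and \<omega> :: "(nat \<Rightarrow> 'm \<Rightarrow> complex) \<Rightarrow> (nat \<Rightarrow> complex)"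
  assumes "smooth_atlas A"
    and "poisson_bracket A pb"
    and "local_star_product A pb Mr"
    and "positive_functional A Mr \<omega>"
  shows "faithful A Mr \<omega> \<longleftrightarrow> functional_supp A \<omega> = UNIV"
proof
  have A: "smooth_atlas A" and L: "local_star_product A pb Mr" and P: "positive_functional A Mr \<omega>"
    using assms by auto
  {
    assume fa: "faithful A Mr \<omega>"
    show "functional_supp A \<omega> = UNIV"
    proof (rule ccontr)
      assume "functional_supp A \<omega> \<noteq> UNIV"
      then obtain p where "p \<in> \<Union>{W. open W \<and> (\<forall>F\<in>C0_series A W. \<omega> F = (\<lambda>n. 0))}"
        unfolding functional_supp_def by auto
      then obtain W where W: "open W" "p \<in> W" "\<forall>F\<in>C0_series A W. \<omega> F = (\<lambda>n. 0)" by blast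
      obtain f where f: "smooth_fun A f" "compact (fsupp f)" "fsupp f \<subseteq> W" "f p \<noteq> 0"
        using bump_exists[OF A W(1,2)] by blast
      define F where "F = (\<lambda>n::nat. if n = 0 then f else (\<lambda>x. 0))"
      have FW: "F \<in> C0_series A W"
      proof (rule C0I)
        fix n
        show "smooth_fun A (F n)" unfolding F_def using f(1) smooth_fun_const[OF A] by simp
        show "compact (fsupp (F n))" unfolding F_def using f(2) by (simp add: fsupp_zero)
        show "fsupp (F n) \<subseteq> W" unfolding F_def using f(3) by (simp add: fsupp_zero)
      qed
      have "\<omega> (star Mr (series_cnj F) F) = (\<lambda>n. 0)"
        using W(3) C0_star[OF A L C0_cnj[OF A FW] FW] by blast
      moreover have "F \<in> C0_series A UNIV" using C0_mono[OF FW] by blast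
      ultimately have "F \<in> {F \<in> C0_series A UNIV. \<omega> (star Mr (series_cnj F) F) = (\<lambda>n. 0)}" by blast
      then have "F = (\<lambda>n x. 0)" using fa unfolding faithful_def by blast
      then have "F 0 p = 0" by simp
      then show False using f(4) unfolding F_def by simp
    qed
  }
  {
    assume supp: "functional_supp A \<omega> = UNIV"
    show "faithful A Mr \<omega>" unfolding faithful_def
    proof
      show "{F \<in> C0_series A UNIV. \<omega> (star Mr (series_cnj F) F) = (\<lambda>n. 0)} \<subseteq> {\<lambda>n x. 0}"
      proof
        fix F assume "F \<in> {F \<in> C0_series A UNIV. \<omega> (star Mr (series_cnj F) F) = (\<lambda>n. 0)}"
        then have FC: "F \<in> C0_series A UNIV" and F0: "\<omega> (star Mr (series_cnj F) F) = (\<lambda>n. 0)" by auto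
        have "F = (\<lambda>n x. 0)"
        proof (rule ccontr)
          assume "F \<noteq> (\<lambda>n x. 0)"
          then show False using supp_faithful_core[OF A L P FC F0 _ supp] by blast
        qed
        then show "F \<in> {\<lambda>n x. 0}" by simp
      qed
      have cz: "series_cnj (\<lambda>n x. 0) = (\<lambda>n (x::'m). 0::complex)" by (simp add: series_cnj_def)
      have sz: "star Mr (\<lambda>n x. 0) (\<lambda>n x. 0) = (\<lambda>n x. 0)"
        by (rule star_zero[OF A L]) (rule smooth_fun_const[OF A])
      show "{\<lambda>n x. 0} \<subseteq> {F \<in> C0_series A UNIV. \<omega> (star Mr (series_cnj F) F) = (\<lambda>n. 0)}"
        using C0_zero[OF A] pf_zero[OF A P] cz sz by simp
    qed
  }
qed

end
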